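(* Let the sequences be generated by Algorithm iMBA and suppose Assumptions 2, 3 and 4 hold. Then there exist $\widehat k\in\mathbb{N}$ and $\widehat\gamma>0$ such that $\|x^{k+1}-\overline x^k\|\le\widehat\gamma\|x^{k+1}-x^k\|$ for all $k\ge\widehat k$.
   Context: Problem (P): $\min_{x\in\mathbb{R}^n}F(x):=g_0(x)+\delta_{\mathbb{R}^m_-}(g(x))+\phi(x)$, where $g=(g_1,\dots,g_m)^\top$ and $\delta_{\mathbb{R}^m_-}$ is the indicator of the nonpositive orthant. Assumption 1 (standing): (i) $g_0:\mathbb{R}^n\to(-\infty,\infty]$ is locally Lipschitz and upper-$\mathcal C^2$ at every point of an open convex set $\mathcal O\supset\Gamma:=\{x:g(x)\in\mathbb{R}^m_-\}\neq\emptyset$, and each $g_i:\mathbb{R}^n\to\mathbb{R}$, $i\in[m]$, is locally Lipschitz and upper-$\mathcal C^2$ at every point of $\mathbb{R}^n$; (ii) $\phi:\mathbb{R}^n\to\mathbb{R}$ is convex and $F$ is bounded below on $\Gamma$. $\partial$ denotes the limiting subdifferential; $\partial g(x):=\{V\in\mathbb{R}^{n\times m}: V_i\in\partial g_i(x)\ \forall i\}$. Define $G(x,s,V,L):=g(s)+V^\top(x-s)+\tfrac12\|x-s\|^2L$. Algorithm iMBA (parameters $0<\mu_{\min}\le\mu_{\max}$, $0<L_{\min}\le L_{\max}$, $M,\beta_C,\beta_S,\alpha>0$, $\tau>1$, $x^0\in\Gamma$): at iteration $k$ choose $\xi^k\in\partial g_0(x^k)$, $V^k\in\partial g(x^k)$,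 $\mu_{k,0}\in[\mu_{\min},\mu_{\max}]$, $L^{k,0}\in[L_{\min},L_{\max}]^m$; for $j=0,1,\dots$ choose self-adjoint $\mathcal Q_{k,j}$ with $\mu_{k,j}\mathcal I\preceq\mathcal Q_{k,j}\preceq(\mu_{k,j}+M)\mathcal I$, let $F_{k,j}(x):=g_0(x^k)+\langle\xi^k,x-x^k\rangle+\frac12\langle x-x^k,\mathcal Q_{k,j}(x-x^k)\rangle+\phi(x)$, $\Gamma_{k,j}:=\{x:G(x,x^k,V^k,L^{k,j})\in\mathbb{R}^m_-\}$, $\overline x^{k,j}$ the unique minimizer of $F_{k,j}$ on $\Gamma_{k,j}$, and compute $y^{k,j}$, $v^{k,j}\in\partial\phi(y^{k,j})$, $\lambda^{k,j}\in\mathbb{R}^m_+$ with $F_{k,j}(y^{k,j})\le F_{k,j}(x^k)$, $(-\langle\lambda^{k,j},G(y^{k,j},x^k,V^k,L^{k,j})\rangle)_++\|[G(y^{k,j},x^k,V^k,L^{k,j})]_+\|_\infty\le\frac{\beta_C}2\|y^{k,j}-x^k\|^2$ and $\|\xi^k+\mathcal Q_{k,j}(y^{k,j}-x^k)+v^{k,j}+V^k\lambda^{k,j}+\langle L^{k,j},\lambda^{k,j}\rangle(y^{k,j}-x^k)\|\le\beta_S\|y^{k,j}-x^k\|$. If $g(y^{k,j})\in\mathbb{R}^m_-$ and $F(y^{k,j})\le F(x^k)-\frac\alpha2\|y^{k,j}-x^k\|^2$, accept ($j_k:=j$); else if $g(y^{k,j})\notin\mathbb{R}^m_-$ set $L^{k,j+1}=\tau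 L^{k,j}$, $\mu_{k,j+1}=\mu_{k,j}$; else $L^{k,j+1}=L^{k,j}$, $\mu_{k,j+1}=\tau\mu_{k,j}$. Then $x^{k+1}:=y^{k,j_k}$, $(\mu_k,\mathcal Q_k,L^k,v^{k+1},\lambda^{k+1}):=(\mu_{k,j_k},\mathcal Q_{k,j_k},L^{k,j_k},v^{k,j_k},\lambda^{k,j_k})$, $\overline x^k:=\overline x^{k,j_k}$. Assumption 2: for each $k,j$, the multifunction $x\mapsto G(x,x^k,V^k,L^{k,j})-\mathbb{R}^m_-$ is metrically subregular at $(\overline x^{k,j},0)$. Assumption 3: $\{x^k\}$ is bounded; $\omega(x^0)$ denotes its set of cluster points. Parametric data: $\mathbb U:=\mathbb{R}^n\times\mathbb{R}^m_+\times\mathbb{R}^{n\times m}\times\mathbb{R}^n\times\mathbb S_+$ ($\mathbb S_+$ = positive semidefinite self-adjoint linear maps on $\mathbb{R}^n$); for $u=(s,L,V,\xi,\mathcal Q)$: $H(u,x):=G(x,s,V,L)$, so $\nabla_xH(u,x)\lambda=V\lambda+\langle L,\lambda\rangle(x-s)$; $\mathcal S(u):=\{x:H(u,x)\in\mathbb{R}^m_-\}$; $\Lambda(u,x,y):=\{\lambda\in\mathcal N_{\mathbb{R}^m_-}(H(u,x)):\nabla_xH(u,x)\lambda=y\}$. The partial bounded multiplier property (BMP) w.r.t. $x$ holds at $(u^*,x^* )$ with $x^*\in\mathcal S(u^* )$ if there exist $\kappa>0$ and a neighborhood $\mathcal U\times\mathcal V$ of $(u^*,x^* )$ such that for all $u\in\mathcal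 U$, $x\in\mathcal V\cap\mathcal S(u)$ and $y\in\mathcal N_{\mathcal S(u)}(x)$, $\Lambda(u,x,y)\cap\{\lambda:\|\lambda\|\le\kappa\|y\|\}\neq\emptyset$. Let $u^k:=(x^k,L^k,V^k,\xi^k,\mathcal Q_k)$. Assumption 4: the partial BMP w.r.t. $x$ holds at every cluster point of $\{(u^k,\overline x^k)\}_{k\in\mathbb{N}}$. *)

theory Defs
  imports "HOL-Analysis.Analysis" "HOL-Library.Extended_Real"
begin

definition regular_subdiff :: "('a::euclidean_space \<Rightarrow> real) \<Rightarrow> 'a \<Rightarrow> 'a set" where
  "regular_subdiff f x = {v. \<forall>e>0. \<exists>d>0. \<forall>z. norm (z - x) < d \<longrightarrow>
       f z \<ge> f x + inner v (z - x) - e * norm (z - x)}"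

definition limiting_subdiff :: "('a::euclidean_space \<Rightarrow> real) \<Rightarrow> 'a \<Rightarrow> 'a set" where
  "limiting_subdiff f x = {v. \<exists>xs vs. xs \<longlonglongrightarrow> x \<and> (\<lambda>k. f (xs k)) \<longlonglongrightarrow> f x \<and>
       vs \<longlonglongrightarrow> v \<and> (\<forall>k. vs k \<in> regular_subdiff f (xs k))}"

definition regular_normal :: "'a::euclidean_space set \<Rightarrow> 'a \<Rightarrow> 'a set" where
  "regular_normal C x = (if x \<in> C then {v. \<forall>e>0. \<exists>d>0. \<forall>z\<in>C. norm (z - x) < d \<longrightarrow>
       inner v (z - x) \<le> e * norm (z - x)} else {})"

definition limiting_normal :: "'a::euclidean_space set \<Rightarrow> 'a \<Rightarrow> 'a set" where
  "limiting_normal C x = (if x \<in> C then {v. \<exists>xs vs. (\<forall>k. xs k \<in> C) \<and> xs \<longlonglongrightarrow> x \<and>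
       vs \<longlonglongrightarrow> v \<and> (\<forall>k. vs k \<in> regular_normal C (xs k))} else {})"

definition loc_lipschitz_at :: "('a::euclidean_space \<Rightarrow> real) \<Rightarrow> 'a \<Rightarrow> bool" where
  "loc_lipschitz_at f x = (\<exists>d>0. \<exists>K. \<forall>a\<in>ball x d. \<forall>b\<in>ball x d. \<bar>f a - f b\<bar> \<le> K * norm (a - b))"

text \<open>Upper-C2 at a point: locally, f minus a quadratic is concave
  (i.e. -f is lower-C2, Rockafellar--Wets Thm 10.33).\<close>
definition upper_C2_at :: "('a::euclidean_space \<Rightarrow> real) \<Rightarrow> 'a \<Rightarrow> bool" where
  "upper_C2_at f x = (\<exists>d>0. \<exists>\<rho>\<ge>0. concave_on (ball x d) (\<lambda>z. f z - \<rho> / 2 * (norm z)\<^sup>2))"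

definition metric_subregular :: "('a::euclidean_space \<Rightarrow> 'b::euclidean_space set) \<Rightarrow> 'a \<Rightarrow> 'b \<Rightarrow> bool" where
  "metric_subregular Phi xb yb = (yb \<in> Phi xb \<and> (\<exists>\<kappa>>0. \<exists>d>0. \<forall>z\<in>ball xb d.
       infdist z {w. yb \<in> Phi w} \<le> \<kappa> * infdist yb (Phi z)))"

definition nonpos :: "(real^'m) set" where
  "nonpos = {z. \<forall>i. z $ i \<le> 0}"

definition nonneg :: "(real^'m) set" where
  "nonneg = {z. \<forall>i. z $ i \<ge> 0}"

definition feas :: "(real^'n \<Rightarrow> real^'m) \<Rightarrow> (real^'n) set" where
  "feas g = {x. g x \<in> nonpos}"

definition Fobj :: "(real^'n \<Rightarrow> real) \<Rightarrow> (real^'n \<Rightarrow> real^'m) \<Rightarrow> (real^'n \<Rightarrow> real) \<Rightarrow> real^'n \<Rightarrow> ereal" where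
  "Fobj g0 g phi x = (if g x \<in> nonpos then ereal (g0 x + phi x) else \<infinity>)"

text \<open>Matrices V in R^(n x m) are represented by their columns: V $ i = V_i in R^n.
  Hence V^T d = V *v d and V lambda = transpose V *v lambda.\<close>
definition Gmaj :: "(real^'n \<Rightarrow> real^'m) \<Rightarrow> real^'n \<Rightarrow> real^'n \<Rightarrow> real^'n^'m \<Rightarrow> real^'m \<Rightarrow> real^'m" where
  "Gmaj g x s V L = g s + V *v (x - s) + (1/2 * (norm (x - s))\<^sup>2) *\<^sub>R L"

text \<open>Gradient of H(u,.) applied to lambda: V lambda + <L,lambda>(x - s).\<close>
definition gradH :: "real^'n \<Rightarrow> real^'m \<Rightarrow> real^'n^'m \<Rightarrow> real^'n \<Rightarrow> real^'m \<Rightarrow> real^'n" where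
  "gradH s L V x lam = transpose V *v lam + inner L lam *\<^sub>R (x - s)"

definition Fmodel :: "(real^'n \<Rightarrow> real) \<Rightarrow> (real^'n \<Rightarrow> real) \<Rightarrow> real^'n \<Rightarrow> real^'n \<Rightarrow> real^'n^'n \<Rightarrow> real^'n \<Rightarrow> real" where
  "Fmodel g0 phi xk xi Q z = g0 xk + inner xi (z - xk) + 1/2 * inner (z - xk) (Q *v (z - xk)) + phi z"

definition pos_part :: "real^'m \<Rightarrow> real^'m" where
  "pos_part z = (\<chi> i. max (z $ i) 0)"

definition norm_inf :: "real^'m::finite \<Rightarrow> real" where
  "norm_inf z = Max (range (\<lambda>i. \<bar>z $ i\<bar>))"

type_synonym ('n,'m) param = "(real^'n) \<times> (real^'m) \<times> (real^'n^'m) \<times> (real^'n) \<times> (real^'n^'n)"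

definition Upar :: "('n::finite,'m::finite) param set" where
  "Upar = {(s, L, V, xi, Q). L \<in> nonneg \<and> transpose Q = Q \<and> (\<forall>z. 0 \<le> inner z (Q *v z))}"

definition Hpar :: "(real^'n \<Rightarrow> real^'m) \<Rightarrow> ('n::finite,'m::finite) param \<Rightarrow> real^'n \<Rightarrow> real^'m" where
  "Hpar g u x = (case u of (s, L, V, xi, Q) \<Rightarrow> Gmaj g x s V L)"

definition Spar :: "(real^'n \<Rightarrow> real^'m) \<Rightarrow> ('n::finite,'m::finite) param \<Rightarrow> (real^'n) set" where
  "Spar g u = {x. Hpar g u x \<in> nonpos}"

definition Lambda_par :: "(real^'n \<Rightarrow> real^'m) \<Rightarrow> ('n::finite,'m::finite) param \<Rightarrow> real^'n \<Rightarrow> real^'n \<Rightarrow> (real^'m) set" where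
  "Lambda_par g u x y = (case u of (s, L, V, xi, Q) \<Rightarrow>
      {lam. lam \<in> limiting_normal nonpos (Hpar g u x) \<and> gradH s L V x lam = y})"

definition partial_BMP :: "(real^'n \<Rightarrow> real^'m) \<Rightarrow> ('n::finite,'m::finite) param \<Rightarrow> real^'n \<Rightarrow> bool" where
  "partial_BMP g us xs = (xs \<in> Spar g us \<and> (\<exists>\<kappa>>0. \<exists>e>0.
      \<forall>u\<in>Upar. dist u us < e \<longrightarrow> (\<forall>x. dist x xs < e \<longrightarrow> x \<in> Spar g u \<longrightarrow>
        (\<forall>y\<in>limiting_normal (Spar g u) x.
           (\<exists>lam\<in>Lambda_par g u x y. norm lam \<le> \<kappa> * norm y)))))"

definition cluster_point :: "(nat \<Rightarrow> 'a::metric_space) \<Rightarrow> 'a \<Rightarrow> bool" where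
  "cluster_point z p = (\<exists>r. strict_mono r \<and> (z \<circ> r) \<longlonglongrightarrow> p)"

end

theory Submission
  imports Defs
begin

lemma inner_mv_transpose: "inner (lam::real^'m) (V *v d) = inner (transpose V *v lam) (d::real^'n)"
  by (simp add: dot_lmul_matrix)

lemma inner_sym_Q: assumes "transpose Q = Q"
  shows "inner (a::real^'n) (Q *v b) = inner b (Q *v a)"
  by (metis assms inner_commute inner_mv_transpose)

lemma mv_component: "((V::real^'n^'m) *v d) $ i = inner (V $ i) d"
  by (simp add: matrix_vector_mult_def inner_vec_def)

lemma Gmaj_comp: "Gmaj g z s V L $ i = g s $ i + inner (V$i) (z-s) + 1/2 * (norm (z-s))\<^sup>2 * L$i"
  by (simp add: Gmaj_def mv_component)

lemma norm_add_sq: "(norm ((a::'a::real_inner) + b))\<^sup>2 = (norm a)\<^sup>2 + 2 * inner a b + (norm b)\<^sup>2"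
  by (simp add: power2_norm_eq_inner inner_add_left inner_add_right inner_commute)

lemma norm_sq_diff: "(norm ((z::'a::real_inner) - s))\<^sup>2 - (norm (w - s))\<^sup>2 = 2 * inner (w - s) (z - w) + (norm (z - w))\<^sup>2"
  using norm_add_sq[of "w - s" "z - w"] by simp

lemma quad_add: assumes "transpose Q = Q"
  shows "inner ((a::real^'n) + b) (Q *v (a + b)) = inner a (Q *v a) + 2 * inner (Q *v a) b + inner b (Q *v b)"
proof -
  have 1: "inner a (Q *v b) = inner b (Q *v a)" using inner_sym_Q[OF assms] by blast
  have 2: "inner b (Q *v a) = inner (Q *v a) b" by (rule inner_commute)
  have "inner (a + b) (Q *v (a + b)) = inner a (Q *v a) + inner a (Q *v b) + (inner b (Q *v a) + inner b (Q *v b))"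
    by (simp only: matrix_vector_right_distrib inner_add_left inner_add_right)
  thus ?thesis using 1 2 by linarith
qed

lemma Gmaj_inner: "inner lam (Gmaj g z s V L) = inner lam (g s) + inner (transpose V *v lam) (z - s) + 1/2 * (norm (z - s))\<^sup>2 * inner lam L"
  by (simp add: Gmaj_def inner_add_right inner_mv_transpose)

lemma Gmaj_diff:
  "inner lam (Gmaj g z s V L) - inner lam (Gmaj g w s V L)
   = inner (gradH s L V w lam) (z - w) + inner L lam / 2 * (norm (z - w))\<^sup>2"
proof -
  have a: "inner (transpose V *v lam) (z - s) - inner (transpose V *v lam) (w - s) = inner (transpose V *v lam) (z - w)"
    by (simp add: inner_diff_right)
  have b: "inner (gradH s L V w lam) (z - w) = inner (transpose V *v lam) (z - w) + inner L lam * inner (w - s) (z - w)"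
    by (simp add: gradH_def inner_add_left)
  have c: "inner lam L = inner L lam" by (rule inner_commute)
  have d: "(norm (z - s))\<^sup>2 = (norm (w - s))\<^sup>2 + 2 * inner (w - s) (z - w) + (norm (z - w))\<^sup>2"
    using norm_sq_diff[of z s w] by linarith
  show ?thesis unfolding Gmaj_inner b c d using a by (simp add: algebra_simps)
qed

lemma Fmodel_diff: assumes "transpose Q = Q"
  shows "Fmodel g0 phi xk xi Q z - Fmodel g0 phi xk xi Q w
   = inner (xi + Q *v (w - xk)) (z - w) + 1/2 * inner (z - w) (Q *v (z - w)) + phi z - phi w"
proof -
  have s: "inner (z - xk) (Q *v (z - xk)) - inner (w - xk) (Q *v (w - xk))
     = 2 * inner (Q *v (w - xk)) (z - w) + inner (z - w) (Q *v (z - w))"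
  proof -
    have e: "(w - xk) + (z - w) = z - xk" by simp
    have "inner (z - xk) (Q *v (z - xk)) = inner (w - xk) (Q *v (w - xk)) + 2 * inner (Q *v (w - xk)) (z - w) + inner (z - w) (Q *v (z - w))"
      using quad_add[OF assms, of "w - xk" "z - w"] unfolding e .
    thus ?thesis by linarith
  qed
  have i1: "inner xi (z - xk) - inner xi (w - xk) = inner xi (z - w)" by (simp add: inner_diff_right)
  have i2: "inner (xi + Q *v (w-xk)) (z-w) = inner xi (z-w) + inner (Q *v (w - xk)) (z - w)" by (simp add: inner_add_left)
  show ?thesis unfolding Fmodel_def using s i1 i2 by linarith
qed

lemma le_eps:
  fixes a b c :: real
  assumes "\<And>e. e > 0 \<Longrightarrow> b \<le> a + e * c"
  shows "b \<le> a"
proof (rule ccontr)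
  assume "\<not> b \<le> a"
  hence ba: "b > a" by simp
  show False
  proof (cases "c \<le> 0")
    case True
    have "b \<le> a + 1 * c" using assms[of 1] by simp
    thus False using True ba by simp
  next
    case False
    define e where "e = (b - a) / (2 * c)"
    have ep: "e > 0" using False ba by (simp add: e_def)
    have "e * c = (b - a) / 2" using False by (simp add: e_def field_simps)
    thus False using assms[OF ep] ba by simp
  qed
qed

lemma convex_reg_sub:
  fixes phi :: "'a::euclidean_space \<Rightarrow> real"
  assumes cv: "convex_on UNIV phi" and v: "v \<in> regular_subdiff phi x"
  shows "phi x + inner v (w - x) \<le> phi w"
proof -
  define d where "d = w - x"
  have "phi x + inner v d \<le> phi w + e * norm d" if e: "e > 0" for e
  proof -
    obtain \<delta> where dp: "\<delta> > 0" and H: "\<And>z. norm (z - x) < \<delta> \<Longrightarrow> phi z \<ge> phi x + inner v (z - x) - e * norm (z - x)"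
      using v e unfolding regular_subdiff_def by blast
    define s where "s = min 1 (\<delta> / (2 * (norm d + 1)))"
    have "0 < \<delta> / (2 * (norm d + 1))" using dp by (intro divide_pos_pos) (auto intro: add_nonneg_pos)
    hence s0: "s > 0" by (simp add: s_def)
    have s1: "s \<le> 1" by (simp add: s_def)
    have "s * norm d \<le> (\<delta> / (2 * (norm d + 1))) * norm d"
      by (intro mult_right_mono) (auto simp: s_def)
    also have "\<dots> < \<delta>"
    proof -
      have "(\<delta> / (2 * (norm d + 1))) * norm d = \<delta> * (norm d / (2 * (norm d + 1)))" by simp
      also have "norm d / (2 * (norm d + 1)) < 1"
      proof -
        have p: "2 * (norm d + 1) > 0" by (auto intro: add_nonneg_pos)
        have "norm d < 2 * (norm d + 1)" by (smt (verit) norm_ge_zero)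
        thus ?thesis using p by (simp add: divide_less_eq)
      qed
      hence "\<delta> * (norm d / (2 * (norm d + 1))) < \<delta> * 1" using dp by (intro mult_strict_left_mono) auto
      finally show ?thesis by simp
    qed
    finally have sd: "s * norm d < \<delta>" .
    define z where "z = (1 - s) *\<^sub>R x + s *\<^sub>R w"
    have zx: "z - x = s *\<^sub>R d" by (simp add: z_def d_def algebra_simps)
    have nzx: "norm (z - x) = s * norm d" using s0 by (simp add: zx)
    have h1: "phi z \<ge> phi x + s * inner v d - e * (s * norm d)"
    proof -
      have "norm (z - x) < \<delta>" using nzx sd by simp
      hence "phi z \<ge> phi x + inner v (z - x) - e * norm (z - x)" by (rule H)
      moreover have "inner v (z - x) = s * inner v d" unfolding zx by (simp add: inner_scaleR_right)
      ultimately show ?thesis using nzx by simp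
    qed
    have h2: "phi z \<le> (1 - s) * phi x + s * phi w"
      unfolding z_def using convex_onD[OF cv, of s x w] s0 s1 by simp
    have a1: "(1 - s) * phi x = phi x - s * phi x" by (simp add: left_diff_distrib)
    have a2: "e * (s * norm d) = s * (e * norm d)" by simp
    have "s * phi x + s * inner v d \<le> s * phi w + s * (e * norm d)"
      using h1 h2 a1 a2 by linarith
    hence "s * (phi x + inner v d) \<le> s * (phi w + e * norm d)" by (simp only: distrib_left)
    thus ?thesis using s0 by (rule mult_left_le_imp_le)
  qed
  hence "phi x + inner v d \<le> phi w" using le_eps[of "phi x + inner v d" "phi w" "norm d"] by blast
  thus ?thesis by (simp add: d_def)
qed

lemma convex_lim_sub:
  fixes phi :: "'a::euclidean_space \<Rightarrow> real"
  assumes cv: "convex_on UNIV phi" and v: "v \<in> limiting_subdiff phi x"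
  shows "phi x + inner v (w - x) \<le> phi w"
proof -
  obtain xs vs where xs: "xs \<longlonglongrightarrow> x" and fx: "(\<lambda>k. phi (xs k)) \<longlonglongrightarrow> phi x"
    and vs: "vs \<longlonglongrightarrow> v" and reg: "\<And>k. vs k \<in> regular_subdiff phi (xs k)"
    using v unfolding limiting_subdiff_def by blast
  have le: "\<And>k. phi (xs k) + inner (vs k) (w - xs k) \<le> phi w"
    using convex_reg_sub[OF cv reg] by blast
  have lim: "(\<lambda>k. phi (xs k) + inner (vs k) (w - xs k)) \<longlonglongrightarrow> phi x + inner v (w - x)"
    by (intro tendsto_intros fx vs xs)
  show ?thesis using tendsto_upperbound[OF lim, of "phi w"] le by simp
qed

lemma convex_bounded_ball:
  fixes phi :: "'a::euclidean_space \<Rightarrow> real"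
  assumes cv: "convex_on UNIV phi"
  shows "\<exists>B. \<forall>z. norm z \<le> R \<longrightarrow> \<bar>phi z\<bar> \<le> B"
proof -
  have cont: "continuous_on UNIV phi" using convex_on_continuous[OF open_UNIV cv] .
  have "compact (phi ` cball 0 R)"
    by (intro compact_continuous_image continuous_on_subset[OF cont]) auto
  then obtain B where "\<forall>y\<in>phi ` cball 0 R. norm y \<le> B"
    using compact_imp_bounded bounded_iff by metis
  thus ?thesis by (metis image_eqI mem_cball_0 real_norm_def)
qed

lemma subgrad_bound:
  fixes phi :: "'a::euclidean_space \<Rightarrow> real"
  assumes sg: "\<And>w. phi x + inner v (w - x) \<le> phi w"
    and B: "\<And>z. norm z \<le> R + 1 \<Longrightarrow> \<bar>phi z\<bar> \<le> B" and xR: "norm x \<le> R"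
  shows "norm v \<le> 2 * B"
proof (cases "v = 0")
  case True
  have "\<bar>phi x\<bar> \<le> B" using B xR by simp
  thus ?thesis using True by simp
next
  case False
  define w where "w = x + (1 / norm v) *\<^sub>R v"
  have nw: "norm w \<le> R + 1"
  proof -
    have "norm w \<le> norm x + norm ((1 / norm v) *\<^sub>R v)" unfolding w_def by (rule norm_triangle_ineq)
    also have "norm ((1 / norm v) *\<^sub>R v) = 1" using False by simp
    finally show ?thesis using xR by simp
  qed
  have "inner v (w - x) = norm v"
    using False by (simp add: w_def inner_scaleR_right power2_norm_eq_inner[symmetric] power2_eq_square)
  hence "norm v \<le> phi w - phi x" using sg[of w] by simp
  also have "\<dots> \<le> 2 * B" using B[OF nw] B[of x] xR by simp
  finally show ?thesis .
qed

lemma convex_growth: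
  fixes phi :: "'a::euclidean_space \<Rightarrow> real"
  assumes cv: "convex_on UNIV phi"
    and B: "\<And>z. norm z \<le> R + 1 \<Longrightarrow> \<bar>phi z\<bar> \<le> B" and xR: "norm x \<le> R"
    and t: "norm (z - x) \<ge> 1"
  shows "phi z - phi x \<ge> - 2 * B * norm (z - x)"
proof -
  define t where "t = norm (z - x)"
  have t1: "t \<ge> 1" using assms by (simp add: t_def)
  have zx: "z \<noteq> x" using t by auto
  define p where "p = (1 - 1/t) *\<^sub>R x + (1/t) *\<^sub>R z"
  have px: "p = x + (1/t) *\<^sub>R (z - x)" by (simp add: p_def algebra_simps)
  have np: "norm p \<le> R + 1"
  proof -
    have "norm p \<le> norm x + norm ((1/t) *\<^sub>R (z - x))" unfolding px by (rule norm_triangle_ineq)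
    also have "norm ((1/t) *\<^sub>R (z - x)) = 1" using t1 zx by (simp add: t_def)
    finally show ?thesis using xR by simp
  qed
  have cvx: "phi p \<le> (1 - 1/t) * phi x + (1/t) * phi z"
    unfolding p_def using convex_onD[OF cv, of "1/t" x z] t1 by simp
  hence "t * phi p \<le> (t - 1) * phi x + phi z" using t1 by (simp add: field_simps)
  hence "phi z - phi x \<ge> t * (phi p - phi x)" by (simp add: algebra_simps)
  moreover have "phi p - phi x \<ge> - 2 * B" using B[OF np] B[of x] xR by simp
  ultimately have "phi z - phi x \<ge> t * (- 2 * B)" using t1
    by (smt (verit) mult_left_mono)
  thus ?thesis by (simp add: t_def algebra_simps)
qed

lemma nsq_comb:
  fixes a b :: "'a::real_inner"
  assumes "u + t = 1"
  shows "u * (norm a)\<^sup>2 + t * (norm b)\<^sup>2 - (norm (u *\<^sub>R a + t *\<^sub>R b))\<^sup>2 = u * t * (norm (a - b))\<^sup>2"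
proof -
  have e1: "(norm (u *\<^sub>R a + t *\<^sub>R b))\<^sup>2 = u*u * inner a a + 2*u*t * inner a b + t*t * inner b b"
    by (simp add: power2_norm_eq_inner inner_add_left inner_add_right inner_commute algebra_simps)
  have e2: "(norm (a - b))\<^sup>2 = inner a a - 2 * inner a b + inner b b"
    by (simp add: power2_norm_eq_inner inner_diff_left inner_diff_right inner_commute)
  have t: "t = 1 - u" using assms by simp
  show ?thesis unfolding e1 e2 power2_norm_eq_inner t by (simp add: algebra_simps)
qed

lemma concave_neg_nsq:
  fixes S :: "'a::real_inner set"
  assumes "convex S" "k \<ge> 0"
  shows "concave_on S (\<lambda>z. - (k * (norm z)\<^sup>2))"
  unfolding concave_on_iff
proof (intro conjI assms ballI allI impI)
  fix a b and u t :: real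
  assume "a \<in> S" "b \<in> S" "u \<ge> 0" "t \<ge> 0" and ut: "u + t = 1"
  have "u * (norm a)\<^sup>2 + t * (norm b)\<^sup>2 - (norm (u *\<^sub>R a + t *\<^sub>R b))\<^sup>2 \<ge> 0"
    unfolding nsq_comb[OF ut] using \<open>u \<ge> 0\<close> \<open>t \<ge> 0\<close> by simp
  hence "k * (u * (norm a)\<^sup>2 + t * (norm b)\<^sup>2 - (norm (u *\<^sub>R a + t *\<^sub>R b))\<^sup>2) \<ge> 0"
    using assms(2) by simp
  thus "u * - (k * (norm a)\<^sup>2) + t * - (k * (norm b)\<^sup>2) \<le> - (k * (norm (u *\<^sub>R a + t *\<^sub>R b))\<^sup>2)"
    by (simp add: algebra_simps)
qed

lemma uc2_reg_local:
  fixes f :: "'a::euclidean_space \<Rightarrow> real"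
  assumes rho: "\<rho> \<ge> 0"
    and conc: "concave_on (ball p r) (\<lambda>z. f z - \<rho>/2 * (norm z)\<^sup>2)"
    and xin: "x \<in> ball p r" and win: "w \<in> ball p r" and v: "v \<in> regular_subdiff f x"
  shows "f w \<le> f x + inner v (w - x) + \<rho>/2 * (norm (w - x))\<^sup>2"
proof -
  define d where "d = w - x"
  define h where "h = (\<lambda>z. f z - \<rho>/2 * (norm z)\<^sup>2)"
  have main: "f w \<le> f x + inner v d + \<rho>/2 * (norm d)\<^sup>2 + e * (norm d + \<rho>/2 * (norm d)\<^sup>2)"
    if e: "e > 0" for e
  proof -
    obtain \<delta> where dp: "\<delta> > 0" and H: "\<And>z. norm (z - x) < \<delta> \<Longrightarrow> f z \<ge> f x + inner v (z - x) - e * norm (z - x)"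
      using v e unfolding regular_subdiff_def by blast
    obtain \<epsilon> where ep: "\<epsilon> > 0" and bsub: "ball x \<epsilon> \<subseteq> ball p r"
      using xin open_ball openE by metis
    define m where "m = min \<delta> \<epsilon>"
    have mp: "m > 0" using dp ep by (simp add: m_def)
    define s where "s = min e (min 1 (m / (2 * (norm d + 1))))"
    have np: "2 * (norm d + 1) > 0" by (auto intro: add_nonneg_pos)
    have "0 < m / (2 * (norm d + 1))" using mp np by simp
    hence s0: "s > 0" using e by (simp add: s_def)
    have s1: "s \<le> 1" and se: "s \<le> e" by (auto simp: s_def)
    have "s * norm d \<le> (m / (2 * (norm d + 1))) * norm d"
      by (intro mult_right_mono) (auto simp: s_def)
    also have "\<dots> < m"
    proof -
      have "(m / (2 * (norm d + 1))) * norm d = m * (norm d / (2 * (norm d + 1)))" by simp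
      also have "norm d / (2 * (norm d + 1)) < 1"
      proof -
        have "norm d < 2 * (norm d + 1)" by (smt (verit) norm_ge_zero)
        thus ?thesis using np by (simp add: divide_less_eq)
      qed
      hence "m * (norm d / (2 * (norm d + 1))) < m * 1" using mp by (intro mult_strict_left_mono) auto
      finally show ?thesis by simp
    qed
    finally have sd: "s * norm d < m" .
    define z where "z = x - s *\<^sub>R d"
    have nzx: "norm (z - x) = s * norm d" using s0 by (simp add: z_def)
    have "dist x z < \<epsilon>" using nzx sd by (simp add: m_def dist_norm norm_minus_commute)
    hence zin: "z \<in> ball p r" using bsub by auto
    have h1: "f z \<ge> f x - s * inner v d - e * (s * norm d)"
    proof -
      have "norm (z - x) < \<delta>" using nzx sd by (simp add: m_def)
      hence "f z \<ge> f x + inner v (z - x) - e * norm (z - x)" by (rule H)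
      moreover have "inner v (z - x) = - (s * inner v d)" by (simp add: z_def inner_scaleR_right)
      ultimately show ?thesis using nzx by simp
    qed
    define t where "t = s / (1 + s)"
    have t0: "t \<ge> 0" and t1: "t \<le> 1" using s0 by (auto simp: t_def)
    have comb: "(1 - t) *\<^sub>R z + t *\<^sub>R w = x"
    proof -
      have "1 - t = 1 / (1 + s)" using s0 by (simp add: t_def field_simps)
      hence "(1 - t) *\<^sub>R z + t *\<^sub>R w = (1 / (1 + s)) *\<^sub>R (z + s *\<^sub>R w)"
        by (simp add: t_def scaleR_add_right)
      also have "z + s *\<^sub>R w = (1 + s) *\<^sub>R x" by (simp add: z_def d_def algebra_simps)
      finally show ?thesis using s0 by simp
    qed
    have hc: "h x \<ge> (1 - t) * h z + t * h w"
      using concave_onD[OF conc t0 t1 zin win] comb by (simp add: h_def)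
    hence hc2: "(1 + s) * h x \<ge> h z + s * h w"
    proof -
      have q1: "(1 + s) * (1 - t) = 1" using s0 by (simp add: t_def field_simps)
      have q2: "(1 + s) * t = s" using s0 by (simp add: t_def field_simps)
      have "(1 + s) * ((1 - t) * h z + t * h w) = ((1 + s) * (1 - t)) * h z + ((1 + s) * t) * h w"
        by (simp add: algebra_simps)
      hence "(1 + s) * ((1 - t) * h z + t * h w) = h z + s * h w" unfolding q1 q2 by simp
      moreover have "(1 + s) * ((1 - t) * h z + t * h w) \<le> (1 + s) * h x"
        using hc s0 by (intro mult_left_mono) auto
      ultimately show ?thesis by simp
    qed
    define X where "X = inner x x"
    define P where "P = inner x d"
    define D where "D = inner d d"
    have nx: "(norm x)\<^sup>2 = X" by (simp add: X_def power2_norm_eq_inner)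
    have nz: "(norm z)\<^sup>2 = X - 2 * s * P + s * s * D"
      by (simp add: z_def X_def P_def D_def power2_norm_eq_inner inner_diff_left inner_diff_right inner_commute algebra_simps)
    have nw: "(norm w)\<^sup>2 = X + 2 * P + D"
    proof -
      have "w = x + d" by (simp add: d_def)
      thus ?thesis by (simp add: X_def P_def D_def power2_norm_eq_inner inner_add_left inner_add_right inner_commute)
    qed
    have nd: "(norm d)\<^sup>2 = D" by (simp add: D_def power2_norm_eq_inner)
    have key: "s * f w \<le> s * (f x + inner v d + e * norm d + \<rho>/2 * (1 + s) * D)"
    proof -
      have "s * (f x + inner v d + e * norm d + \<rho>/2 * (1 + s) * D) - s * f w
          = ((1 + s) * h x - (h z + s * h w)) + (f z - (f x - s * inner v d - e * (s * norm d)))"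
        unfolding h_def nx nz nw by (simp add: algebra_simps add_divide_distrib)
      moreover have "(1 + s) * h x - (h z + s * h w) \<ge> 0" using hc2 by simp
      moreover have "f z - (f x - s * inner v d - e * (s * norm d)) \<ge> 0" using h1 by simp
      ultimately show ?thesis by linarith
    qed
    hence k2: "f w \<le> f x + inner v d + e * norm d + \<rho>/2 * (1 + s) * D"
      using s0 by (rule mult_left_le_imp_le)
    have "\<rho>/2 * (1 + s) * D \<le> \<rho>/2 * (1 + e) * D"
    proof -
      have "D \<ge> 0" by (simp add: D_def)
      thus ?thesis using se rho by (intro mult_right_mono mult_left_mono) auto
    qed
    hence "f w \<le> f x + inner v d + e * norm d + \<rho>/2 * (1 + e) * D" using k2 by linarith
    thus ?thesis unfolding nd by (simp add: algebra_simps add_divide_distrib)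
  qed
  have "f w \<le> f x + inner v d + \<rho>/2 * (norm d)\<^sup>2"
    using le_eps[of "f w" "f x + inner v d + \<rho>/2 * (norm d)\<^sup>2" "norm d + \<rho>/2 * (norm d)\<^sup>2"] main
    by blast
  thus ?thesis by (simp add: d_def)
qed

lemma uc2_lim_local:
  fixes f :: "'a::euclidean_space \<Rightarrow> real"
  assumes rho: "\<rho> \<ge> 0"
    and conc: "concave_on (ball p r) (\<lambda>z. f z - \<rho>/2 * (norm z)\<^sup>2)"
    and xin: "x \<in> ball p r" and win: "w \<in> ball p r" and v: "v \<in> limiting_subdiff f x"
  shows "f w \<le> f x + inner v (w - x) + \<rho>/2 * (norm (w - x))\<^sup>2"
proof -
  obtain xs vs where xs: "xs \<longlonglongrightarrow> x" and fx: "(\<lambda>k. f (xs k)) \<longlonglongrightarrow> f x"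
    and vs: "vs \<longlonglongrightarrow> v" and reg: "\<And>k. vs k \<in> regular_subdiff f (xs k)"
    using v unfolding limiting_subdiff_def by blast
  have ev: "eventually (\<lambda>k. xs k \<in> ball p r) sequentially"
    using topological_tendstoD[OF xs open_ball xin] .
  have ev2: "eventually (\<lambda>k. f w \<le> f (xs k) + inner (vs k) (w - xs k) + \<rho>/2 * (norm (w - xs k))\<^sup>2) sequentially"
    using ev by eventually_elim (rule uc2_reg_local[OF rho conc _ win reg])
  have lim: "(\<lambda>k. f (xs k) + inner (vs k) (w - xs k) + \<rho>/2 * (norm (w - xs k))\<^sup>2)
      \<longlonglongrightarrow> f x + inner v (w - x) + \<rho>/2 * (norm (w - x))\<^sup>2"
    by (intro tendsto_intros fx vs xs)
  show ?thesis using tendsto_lowerbound[OF lim ev2] by simp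
qed

lemma conv_aux: fixes fw fx A B C I Vi ui rho :: real assumes "A = B + 2*I + C" "ui = Vi - rho*I"
 shows "(fw \<le> fx + Vi + rho/2*C) \<longleftrightarrow> (fw - rho/2*A \<le> fx - rho/2*B + ui)"
proof -
  have "fx - rho/2*B + ui - (fw - rho/2*A) = fx + Vi + rho/2*C - fw"
    unfolding assms by (simp add: algebra_simps)
  thus ?thesis by linarith
qed

lemma uc2_segment:
  fixes f :: "'a::euclidean_space \<Rightarrow> real"
  assumes rpos: "r > 0" and K: "convex K" and xK: "x \<in> K" and yK: "y \<in> K"
    and conc: "\<And>p. p \<in> K \<Longrightarrow> concave_on (ball p r) (\<lambda>z. f z - \<rho>/2 * (norm z)\<^sup>2)"
    and loc: "\<And>w. w \<in> ball x r \<Longrightarrow> f w \<le> f x + inner v (w - x) + \<rho>/2 * (norm (w - x))\<^sup>2"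
  shows "f y \<le> f x + inner v (y - x) + \<rho>/2 * (norm (y - x))\<^sup>2"
proof -
  define h where "h = (\<lambda>z. f z - \<rho>/2 * (norm z)\<^sup>2)"
  define u where "u = v - \<rho> *\<^sub>R x"
  have conv: "f w \<le> f x + inner v (w - x) + \<rho>/2 * (norm (w - x))\<^sup>2 \<longleftrightarrow> h w \<le> h x + inner u (w - x)" for w
  proof -
    have "(norm w)\<^sup>2 = (norm x)\<^sup>2 + 2 * inner x (w - x) + (norm (w - x))\<^sup>2"
      using norm_add_sq[of x "w - x"] by simp
    moreover have "inner u (w - x) = inner v (w - x) - \<rho> * inner x (w - x)"
      by (simp add: u_def inner_diff_left)
    ultimately show ?thesis unfolding h_def
      by (intro conv_aux[where A="(norm w)\<^sup>2" and B="(norm x)\<^sup>2" and I="inner x (w - x)" and C="(norm (w - x))\<^sup>2"])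
  qed
  obtain N :: nat where N: "real N > norm (y - x) / r" using reals_Archimedean2 by blast
  have Npos: "N > 0"
  proof -
    have "norm (y - x) / r \<ge> 0" using rpos by simp
    thus ?thesis using N by (cases N) auto
  qed
  define p where "p = (\<lambda>i::nat. x + (real i / real N) *\<^sub>R (y - x))"
  have step: "p (Suc i) - p i = (1 / real N) *\<^sub>R (y - x)" for i
  proof -
    have e1: "real (Suc i) / real N - real i / real N = 1 / real N" by (simp add: diff_divide_distrib[symmetric])
    have "p (Suc i) - p i = (real (Suc i) / real N - real i / real N) *\<^sub>R (y - x)"
      unfolding p_def scaleR_diff_left by simp
    thus ?thesis unfolding e1 .
  qed
  have stepn: "norm ((1 / real N) *\<^sub>R (y - x)) < r"
  proof -
    have "norm ((1 / real N) *\<^sub>R (y - x)) = norm (y - x) / real N" using Npos by simp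
    also have "\<dots> < r" using N Npos rpos by (simp add: field_simps)
    finally show ?thesis .
  qed
  have pK: "p i \<in> K" if "i \<le> N" for i
  proof -
    have "p i = (1 - real i / real N) *\<^sub>R x + (real i / real N) *\<^sub>R y"
      by (simp add: p_def algebra_simps)
    moreover have "real i / real N \<le> 1" "real i / real N \<ge> 0" using that Npos by auto
    ultimately show ?thesis using K xK yK unfolding convex_def by (metis diff_add_cancel diff_ge_0_iff_ge)
  qed
  define D where "D = (\<lambda>i. h (p (Suc i)) - h (p i))"
  have mono: "D (Suc i) \<le> D i" if "Suc (Suc i) \<le> N" for i
  proof -
    have pm: "p (Suc i) \<in> K" using pK that by simp
    have a: "p i \<in> ball (p (Suc i)) r"
      using step[of i] stepn by (simp add: dist_norm)
    have b: "p (Suc (Suc i)) \<in> ball (p (Suc i)) r"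
    proof -
      have "dist (p (Suc i)) (p (Suc (Suc i))) = norm (p (Suc (Suc i)) - p (Suc i))"
        by (simp add: dist_norm norm_minus_commute)
      thus ?thesis using step[of "Suc i"] stepn by simp
    qed
    have mid: "(1 - 1/2) *\<^sub>R p i + (1/2) *\<^sub>R p (Suc (Suc i)) = p (Suc i)"
    proof -
      define q where "q = p (Suc i)"
      define e where "e = (1 / real N) *\<^sub>R (y - x)"
      have 1: "p (Suc (Suc i)) = q + e" using step[of "Suc i"] by (simp add: q_def e_def algebra_simps)
      have 2: "p i = q - e" using step[of i] by (simp add: q_def e_def algebra_simps)
      have 3: "(q - e) + (q + e) = 2 *\<^sub>R q" by (simp add: scaleR_2)
      have h12: "(1 - 1/2 :: real) = 1/2" by simp
      have "(1 - 1/2) *\<^sub>R (q - e) + (1/2) *\<^sub>R (q + e) = (1/2) *\<^sub>R ((q - e) + (q + e))"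
        unfolding h12 by (rule scaleR_add_right[symmetric])
      also have "\<dots> = q" unfolding 3 by simp
      finally show ?thesis unfolding 1 2 q_def .
    qed
    have "h (p (Suc i)) \<ge> (1 - 1/2) * h (p i) + (1/2) * h (p (Suc (Suc i)))"
      using concave_onD[OF conc[OF pm], of "1/2" "p i" "p (Suc (Suc i))"] a b mid by (simp add: h_def)
    thus ?thesis by (simp add: D_def)
  qed
  have allle: "\<forall>i. Suc i \<le> N \<longrightarrow> D i \<le> D 0"
  proof
    fix i show "Suc i \<le> N \<longrightarrow> D i \<le> D 0"
    proof (induction i)
      case 0 show ?case by simp
    next
      case (Suc i)
      show ?case using Suc mono[of i] by auto
    qed
  qed
  have D0: "D 0 \<le> inner u ((1 / real N) *\<^sub>R (y - x))"
  proof -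
    have p0: "p 0 = x" by (simp add: p_def)
    have "dist x (p 1) = norm (p 1 - x)" by (simp add: dist_norm norm_minus_commute)
    hence "p 1 \<in> ball x r" using step[of 0] stepn p0 by simp
    hence "h (p 1) \<le> h x + inner u (p 1 - x)" using loc conv by blast
    moreover have "p 1 - x = (1 / real N) *\<^sub>R (y - x)" using step[of 0] p0 by simp
    ultimately show ?thesis by (simp add: D_def p0)
  qed
  have "h y - h x = (\<Sum>i<N. D i)"
  proof -
    have "(\<Sum>i<N. D i) = h (p N) - h (p 0)" unfolding D_def by (rule sum_lessThan_telescope)
    moreover have "p N = y" "p 0 = x" using Npos by (auto simp: p_def)
    ultimately show ?thesis by simp
  qed
  also have "\<dots> \<le> (\<Sum>i<N. D 0)" using allle by (intro sum_mono) auto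
  also have "\<dots> = real N * D 0" by simp
  also have "\<dots> \<le> real N * inner u ((1 / real N) *\<^sub>R (y - x))" using D0 by (intro mult_left_mono) auto
  also have "\<dots> = inner u (y - x)" using Npos by (simp add: inner_scaleR_right)
  finally have "h y \<le> h x + inner u (y - x)" by simp
  thus ?thesis using conv by blast
qed

lemma uniform_cover:
  fixes K :: "'a::metric_space set"
  assumes K: "compact K" and H: "\<forall>z\<in>K. \<exists>d>0. \<exists>c::real. P z d c"
  shows "\<exists>r>0. \<exists>c. \<forall>p\<in>K. \<exists>z d c'. P z d c' \<and> ball p r \<subseteq> ball z d \<and> c' \<le> c"
proof -
  have "\<forall>z\<in>K. \<exists>dc. fst dc > 0 \<and> P z (fst dc) (snd dc)" using H by auto
  then obtain G where G: "\<forall>z\<in>K. fst (G z) > 0 \<and> P z (fst (G z)) (snd (G z))"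
    using bchoice[of K "\<lambda>z dc. fst dc > 0 \<and> P z (fst dc) (snd dc)"] by blast
  define D where "D = (\<lambda>z. fst (G z))"
  define C where "C = (\<lambda>z. snd (G z))"
  have DC: "\<forall>z\<in>K. D z > 0 \<and> P z (D z) (C z)" using G by (simp add: D_def C_def)
  have cov: "K \<subseteq> (\<Union>z\<in>K. ball z (D z / 2))" using DC by force
  obtain F where F: "F \<subseteq> K" "finite F" "K \<subseteq> (\<Union>z\<in>F. ball z (D z / 2))"
    using compactE_image[OF K _ cov] by blast
  show ?thesis
  proof (cases "F = {}")
    case True
    hence "K = {}" using F by auto
    thus ?thesis by (intro exI[of _ 1]) auto
  next
    case False
    define r where "r = Min (D ` F) / 2"
    define c where "c = Max (C ` F)"
    have "Min (D ` F) > 0" using F False DC by (subst Min_gr_iff) auto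
    hence rpos: "r > 0" unfolding r_def by simp
    have "\<forall>p\<in>K. \<exists>z d c'. P z d c' \<and> ball p r \<subseteq> ball z d \<and> c' \<le> c"
    proof
      fix p assume "p \<in> K"
      then obtain z where zF: "z \<in> F" and pz: "dist z p < D z / 2" using F by auto
      have zK: "z \<in> K" using zF F by auto
      have rle: "r \<le> D z / 2" unfolding r_def using F zF by (simp add: Min_le)
      have "ball p r \<subseteq> ball z (D z)"
      proof
        fix q assume "q \<in> ball p r"
        hence "dist p q < r" by simp
        hence "dist z q < D z" using dist_triangle[of z q p] pz rle by simp
        thus "q \<in> ball z (D z)" by simp
      qed
      moreover have "C z \<le> c" unfolding c_def using F zF by (simp add: Max_ge)
      ultimately show "\<exists>z d c'. P z d c' \<and> ball p r \<subseteq> ball z d \<and> c' \<le> c"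
        using DC zK by blast
    qed
    thus ?thesis using rpos by blast
  qed
qed

lemma uniform_uc2:
  fixes f :: "'a::euclidean_space \<Rightarrow> real"
  assumes K: "compact K" and H: "\<forall>z\<in>K. upper_C2_at f z"
  shows "\<exists>r>0. \<exists>\<rho>\<ge>0. \<forall>p\<in>K. concave_on (ball p r) (\<lambda>z. f z - \<rho>/2 * (norm z)\<^sup>2)"
proof -
  define P where "P = (\<lambda>z d c. c \<ge> 0 \<and> concave_on (ball z d) (\<lambda>w. f w - c/2 * (norm w)\<^sup>2))"
  have "\<forall>z\<in>K. \<exists>d>0. \<exists>c::real. P z d c" using H unfolding upper_C2_at_def P_def by blast
  hence "\<exists>r>0. \<exists>c. \<forall>p\<in>K. \<exists>z d c'. P z d c' \<and> ball p r \<subseteq> ball z d \<and> c' \<le> c"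
    by (rule uniform_cover[OF K])
  then obtain r c where r: "r > 0" and rc: "\<forall>p\<in>K. \<exists>z d c'. P z d c' \<and> ball p r \<subseteq> ball z d \<and> c' \<le> c"
    by blast
  define \<rho> where "\<rho> = max c 0"
  have "\<forall>p\<in>K. concave_on (ball p r) (\<lambda>z. f z - \<rho>/2 * (norm z)\<^sup>2)"
  proof
    fix p assume "p \<in> K"
    then obtain z d c' where Pz: "P z d c'"
      and sub: "ball p r \<subseteq> ball z d" and le: "c' \<le> c" using rc by blast
    have c': "c' \<ge> 0" and cc: "concave_on (ball z d) (\<lambda>w. f w - c'/2 * (norm w)\<^sup>2)"
      using Pz by (auto simp: P_def)
    have c1: "concave_on (ball p r) (\<lambda>w. f w - c'/2 * (norm w)\<^sup>2)"
      using cc sub unfolding concave_on_def by (rule convex_on_subset) simp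
    have c2: "concave_on (ball p r) (\<lambda>w. - ((\<rho> - c')/2 * (norm w)\<^sup>2))"
      using le by (intro concave_neg_nsq) (auto simp: \<rho>_def)
    have "concave_on (ball p r) (\<lambda>w. (f w - c'/2 * (norm w)\<^sup>2) + - ((\<rho> - c')/2 * (norm w)\<^sup>2))"
      by (rule concave_on_add[OF c1 c2])
    moreover have "(\<lambda>w. (f w - c'/2 * (norm w)\<^sup>2) + - ((\<rho> - c')/2 * (norm w)\<^sup>2)) = (\<lambda>z. f z - \<rho>/2 * (norm z)\<^sup>2)"
      by (rule ext) (simp add: algebra_simps add_divide_distrib diff_divide_distrib)
    ultimately show "concave_on (ball p r) (\<lambda>z. f z - \<rho>/2 * (norm z)\<^sup>2)" by simp
  qed
  moreover have "\<rho> \<ge> 0" by (simp add: \<rho>_def)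
  ultimately show ?thesis using r by blast
qed

lemma uc2_global:
  fixes f :: "'a::euclidean_space \<Rightarrow> real"
  assumes K: "compact K" "convex K" and H: "\<forall>z\<in>K. upper_C2_at f z"
  shows "\<exists>\<rho>\<ge>0. \<forall>x\<in>K. \<forall>y\<in>K. \<forall>v\<in>limiting_subdiff f x.
            f y \<le> f x + inner v (y - x) + \<rho>/2 * (norm (y - x))\<^sup>2"
proof -
  obtain r \<rho> where r: "r > 0" and rho: "\<rho> \<ge> 0"
    and conc: "\<forall>p\<in>K. concave_on (ball p r) (\<lambda>z. f z - \<rho>/2 * (norm z)\<^sup>2)"
    using uniform_uc2[OF K(1) H] by blast
  have "\<forall>x\<in>K. \<forall>y\<in>K. \<forall>v\<in>limiting_subdiff f x.
            f y \<le> f x + inner v (y - x) + \<rho>/2 * (norm (y - x))\<^sup>2"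
  proof (intro ballI)
    fix x y v assume xK: "x \<in> K" and yK: "y \<in> K" and v: "v \<in> limiting_subdiff f x"
    have xb: "x \<in> ball x r" using r by simp
    show "f y \<le> f x + inner v (y - x) + \<rho>/2 * (norm (y - x))\<^sup>2"
    proof (rule uc2_segment[OF r K(2) xK yK])
      show "\<And>p. p \<in> K \<Longrightarrow> concave_on (ball p r) (\<lambda>z. f z - \<rho>/2 * (norm z)\<^sup>2)" using conc by blast
      show "\<And>w. w \<in> ball x r \<Longrightarrow> f w \<le> f x + inner v (w - x) + \<rho>/2 * (norm (w - x))\<^sup>2"
        using uc2_lim_local[OF rho conc[rule_format, OF xK] xb _ v] by blast
    qed
  qed
  thus ?thesis using rho by blast
qed

lemma lip_reg_bound:
  fixes f :: "'a::euclidean_space \<Rightarrow> real"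
  assumes lip: "\<forall>a\<in>ball p r. \<forall>b\<in>ball p r. \<bar>f a - f b\<bar> \<le> c * norm (a - b)"
    and xin: "x \<in> ball p r" and v: "v \<in> regular_subdiff f x"
  shows "norm v \<le> c"
proof (cases "v = 0")
  case True
  obtain \<epsilon> where ep: "\<epsilon> > 0" and bsub: "ball x \<epsilon> \<subseteq> ball p r"
    using xin open_ball openE by metis
  obtain u :: 'a where u: "norm u = 1" using vector_choose_size[of 1] by auto
  define a where "a = x + (\<epsilon>/2) *\<^sub>R u"
  have "dist x a < \<epsilon>" using ep u by (simp add: a_def dist_norm)
  hence "a \<in> ball p r" using bsub by auto
  hence "\<bar>f a - f x\<bar> \<le> c * norm (a - x)" using lip xin by blast
  moreover have "norm (a - x) > 0" using ep u by (simp add: a_def)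
  ultimately have "c * norm (a - x) \<ge> 0" "norm (a - x) > 0" by linarith+
  hence "c \<ge> 0" by (simp add: zero_le_mult_iff)
  thus ?thesis using True by simp
next
  case False
  obtain \<epsilon> where ep: "\<epsilon> > 0" and bsub: "ball x \<epsilon> \<subseteq> ball p r"
    using xin open_ball openE by metis
  define u where "u = (1 / norm v) *\<^sub>R v"
  have nu: "norm u = 1" using False by (simp add: u_def)
  have vu: "inner v u = norm v" using False
    by (simp add: u_def inner_scaleR_right power2_norm_eq_inner[symmetric] power2_eq_square)
  have "norm v \<le> c + e" if e: "e > 0" for e
  proof -
    obtain \<delta> where dp: "\<delta> > 0" and R: "\<And>z. norm (z - x) < \<delta> \<Longrightarrow> f z \<ge> f x + inner v (z - x) - e * norm (z - x)"
      using v e unfolding regular_subdiff_def by blast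
    define s where "s = min \<delta> \<epsilon> / 2"
    have s0: "s > 0" using dp ep by (simp add: s_def)
    define z where "z = x + s *\<^sub>R u"
    have nzx: "norm (z - x) = s" using s0 nu by (simp add: z_def)
    have "norm (z - x) < \<delta>" using nzx dp ep by (simp add: s_def)
    hence r1: "f z \<ge> f x + s * norm v - e * s" using R[of z] nzx vu by (simp add: z_def inner_scaleR_right)
    have "dist x z < \<epsilon>" using nzx dp ep by (simp add: s_def dist_norm norm_minus_commute)
    hence "z \<in> ball p r" using bsub by auto
    hence "\<bar>f z - f x\<bar> \<le> c * norm (z - x)" using lip xin by blast
    hence "f z - f x \<le> c * s" using nzx by simp
    hence "s * norm v \<le> s * (c + e)" using r1 by (simp add: algebra_simps)
    thus ?thesis using s0 by (rule mult_left_le_imp_le)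
  qed
  thus ?thesis using le_eps[of "norm v" c 1] by simp
qed

lemma lip_lim_bound:
  fixes f :: "'a::euclidean_space \<Rightarrow> real"
  assumes lip: "\<forall>a\<in>ball p r. \<forall>b\<in>ball p r. \<bar>f a - f b\<bar> \<le> c * norm (a - b)"
    and xin: "x \<in> ball p r" and v: "v \<in> limiting_subdiff f x"
  shows "norm v \<le> c"
proof -
  obtain xs vs where xs: "xs \<longlonglongrightarrow> x"
    and vs: "vs \<longlonglongrightarrow> v" and reg: "\<And>k. vs k \<in> regular_subdiff f (xs k)"
    using v unfolding limiting_subdiff_def by blast
  have ev: "eventually (\<lambda>k. xs k \<in> ball p r) sequentially"
    using topological_tendstoD[OF xs open_ball xin] .
  have ev2: "eventually (\<lambda>k. norm (vs k) \<le> c) sequentially"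
    using ev by eventually_elim (rule lip_reg_bound[OF lip _ reg])
  show ?thesis using tendsto_upperbound[OF tendsto_norm[OF vs] ev2] by simp
qed

lemma uniform_lip_bound:
  fixes f :: "'a::euclidean_space \<Rightarrow> real"
  assumes K: "compact K" and H: "\<forall>z\<in>K. loc_lipschitz_at f z"
  shows "\<exists>c. \<forall>x\<in>K. \<forall>v\<in>limiting_subdiff f x. norm v \<le> c"
proof -
  define P where "P = (\<lambda>z d c. \<forall>a\<in>ball z d. \<forall>b\<in>ball z d. \<bar>f a - f b\<bar> \<le> c * norm (a - b))"
  have "\<forall>z\<in>K. \<exists>d>0. \<exists>c::real. P z d c" using H unfolding loc_lipschitz_at_def P_def by blast
  hence "\<exists>r>0. \<exists>c. \<forall>p\<in>K. \<exists>z d c'. P z d c' \<and> ball p r \<subseteq> ball z d \<and> c' \<le> c"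
    by (rule uniform_cover[OF K])
  then obtain r c where r: "r > 0" and rc: "\<forall>p\<in>K. \<exists>z d c'. P z d c' \<and> ball p r \<subseteq> ball z d \<and> c' \<le> c"
    by blast
  have "\<forall>x\<in>K. \<forall>v\<in>limiting_subdiff f x. norm v \<le> c"
  proof (intro ballI)
    fix x v assume xK: "x \<in> K" and v: "v \<in> limiting_subdiff f x"
    obtain z d c' where Pz: "P z d c'" and sub: "ball x r \<subseteq> ball z d" and le: "c' \<le> c" using rc xK by blast
    have P: "\<forall>a\<in>ball z d. \<forall>b\<in>ball z d. \<bar>f a - f b\<bar> \<le> c' * norm (a - b)" using Pz by (simp add: P_def)
    have "\<forall>a\<in>ball x r. \<forall>b\<in>ball x r. \<bar>f a - f b\<bar> \<le> c * norm (a - b)"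
    proof (intro ballI)
      fix a b assume "a \<in> ball x r" "b \<in> ball x r"
      hence "\<bar>f a - f b\<bar> \<le> c' * norm (a - b)" using P sub by blast
      also have "\<dots> \<le> c * norm (a - b)" using le by (intro mult_right_mono) auto
      finally show "\<bar>f a - f b\<bar> \<le> c * norm (a - b)" .
    qed
    thus "norm v \<le> c" using lip_lim_bound[OF _ _ v, of x r c] r by simp
  qed
  thus ?thesis by blast
qed

lemma reg_normal_nonpos:
  assumes zn: "(z::real^'m) \<in> nonpos" and v: "v \<in> regular_normal nonpos z"
  shows "v $ i \<ge> 0 \<and> v $ i * z $ i = 0"
proof -
  have R: "\<forall>e>0. \<exists>d>0. \<forall>w\<in>nonpos. norm (w - z) < d \<longrightarrow> inner v (w - z) \<le> e * norm (w - z)"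
    using v zn unfolding regular_normal_def by simp
  have ge: "v $ i \<ge> 0"
  proof (rule ccontr)
    assume "\<not> v $ i \<ge> 0"
    hence neg: "v $ i < 0" by simp
    obtain d where d: "d > 0" and H: "\<forall>w\<in>nonpos. norm (w - z) < d \<longrightarrow> inner v (w - z) \<le> (- v $ i / 2) * norm (w - z)"
      using R neg by (metis neg_0_less_iff_less half_gt_zero_iff divide_minus_left)
    define t where "t = d / 2"
    have t: "t > 0" "t < d" using d by (auto simp: t_def)
    define w where "w = z - (t *\<^sub>R axis i (1::real))"
    have wn: "w \<in> nonpos" unfolding nonpos_def
    proof (intro CollectI allI)
      fix j have "z $ j \<le> 0" using zn by (simp add: nonpos_def)
      thus "w $ j \<le> 0" using t by (cases "j = i") (auto simp: w_def axis_def)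
    qed
    have wz: "w - z = - (t *\<^sub>R axis i 1)" by (simp add: w_def)
    have nwz: "norm (w - z) = t" using t by (simp add: wz)
    have "inner v (w - z) = - t * v $ i" by (simp add: wz inner_axis)
    moreover have "inner v (w - z) \<le> (- v $ i / 2) * norm (w - z)" using H wn nwz t(2) by blast
    ultimately have "- t * v $ i \<le> (- v $ i / 2) * t" using nwz by simp
    hence "t * (- v $ i) \<le> t * (- v $ i / 2)" by (simp add: algebra_simps)
    hence "- v $ i \<le> - v $ i / 2" using t by (simp add: mult_le_cancel_left_pos)
    thus False using neg by simp
  qed
  have eq: "v $ i * z $ i = 0"
  proof (rule ccontr)
    assume "v $ i * z $ i \<noteq> 0"
    hence pos: "v $ i > 0" and zneg: "z $ i < 0" using ge zn unfolding nonpos_def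
      by (auto simp: less_le)
    obtain d where d: "d > 0" and H: "\<forall>w\<in>nonpos. norm (w - z) < d \<longrightarrow> inner v (w - z) \<le> (v $ i / 2) * norm (w - z)"
      using R pos by (metis half_gt_zero_iff)
    define t where "t = min (d / 2) (- z $ i)"
    have t: "t > 0" "t < d" "t \<le> - z $ i" using d zneg by (auto simp: t_def)
    define w where "w = z + (t *\<^sub>R axis i (1::real))"
    have wn: "w \<in> nonpos" unfolding nonpos_def
    proof (intro CollectI allI)
      fix j have "z $ j \<le> 0" using zn by (simp add: nonpos_def)
      thus "w $ j \<le> 0" using t by (cases "j = i") (auto simp: w_def axis_def)
    qed
    have wz: "w - z = t *\<^sub>R axis i 1" by (simp add: w_def)
    have nwz: "norm (w - z) = t" using t by (simp add: wz)
    have "inner v (w - z) = t * v $ i" by (simp add: wz inner_axis)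
    moreover have "inner v (w - z) \<le> (v $ i / 2) * norm (w - z)" using H wn nwz t(2) by blast
    ultimately have "t * v $ i \<le> (v $ i / 2) * t" using nwz by simp
    hence "t * v $ i \<le> t * (v $ i / 2)" by (simp add: algebra_simps)
    hence "v $ i \<le> v $ i / 2" using t by (simp add: mult_le_cancel_left_pos)
    thus False using pos by simp
  qed
  show ?thesis using ge eq by simp
qed

lemma lim_normal_nonpos:
  assumes v: "v \<in> limiting_normal nonpos (z::real^'m)"
  shows "v $ i \<ge> 0 \<and> v $ i * z $ i = 0"
proof -
  have zn: "z \<in> nonpos" using v unfolding limiting_normal_def by (auto split: if_splits)
  obtain xs vs where xsn: "\<forall>k. xs k \<in> nonpos" and xs: "xs \<longlonglongrightarrow> z"
    and vs: "vs \<longlonglongrightarrow> v" and reg: "\<forall>k. vs k \<in> regular_normal nonpos (xs k)"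
    using v zn unfolding limiting_normal_def by auto
  have k: "vs k $ i \<ge> 0 \<and> vs k $ i * xs k $ i = 0" for k
    using reg_normal_nonpos[OF xsn[rule_format] reg[rule_format]] by blast
  have l1: "(\<lambda>k. vs k $ i) \<longlonglongrightarrow> v $ i" by (intro tendsto_intros vs)
  have l2: "(\<lambda>k. vs k $ i * xs k $ i) \<longlonglongrightarrow> v $ i * z $ i" by (intro tendsto_intros vs xs)
  have "v $ i \<ge> 0" using tendsto_lowerbound[OF l1, of 0] k by simp
  moreover have "v $ i * z $ i = 0"
  proof -
    have "(\<lambda>k. vs k $ i * xs k $ i) = (\<lambda>k. 0)" using k by auto
    hence "(\<lambda>k. 0::real) \<longlonglongrightarrow> v $ i * z $ i" using l2 by simp
    thus ?thesis using LIMSEQ_unique[OF _ tendsto_const] by metis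
  qed
  ultimately show ?thesis by simp
qed

lemma convex_normal_lim:
  assumes xC: "x \<in> C" and a: "\<forall>z\<in>C. inner a (z - x) \<le> 0"
  shows "a \<in> limiting_normal C x"
proof -
  have "a \<in> regular_normal C x"
    unfolding regular_normal_def using xC a
    by (auto intro!: exI[of _ 1] order_trans[OF _ mult_nonneg_nonneg])
  hence "(\<forall>k. (\<lambda>k. x) k \<in> C) \<and> (\<lambda>k. x) \<longlonglongrightarrow> x \<and> (\<lambda>k. a) \<longlonglongrightarrow> a \<and> (\<forall>k. (\<lambda>k. a) k \<in> regular_normal C ((\<lambda>k. x) k))"
    using xC by simp
  hence "\<exists>xs vs. (\<forall>k. xs k \<in> C) \<and> xs \<longlonglongrightarrow> x \<and> vs \<longlonglongrightarrow> a \<and> (\<forall>k. vs k \<in> regular_normal C (xs k))"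
    by (intro exI[of _ "\<lambda>k. x"] exI[of _ "\<lambda>k. a"])
  thus ?thesis unfolding limiting_normal_def using xC by simp
qed

lemma sep_kkt:
  fixes h :: "'a::euclidean_space \<Rightarrow> real"
  assumes hc: "convex_on UNIV h" and S: "convex S" and xS: "xb \<in> S" and mn: "\<forall>z\<in>S. h xb \<le> h z"
  shows "\<exists>g. (\<forall>z. h xb + inner g (z - xb) \<le> h z) \<and> (\<forall>z\<in>S. inner g (z - xb) \<ge> 0)"
proof -
  define A where "A = {p :: 'a \<times> real. snd p > h (fst p) - h xb}"
  define T where "T = S \<times> {..(0::real)}"
  have cA: "convex A"
    unfolding convex_def A_def
  proof (intro ballI allI impI, clarsimp)
    fix z1 r1 z2 r2 and u t :: real
    assume r1: "h z1 - h xb < r1" and r2: "h z2 - h xb < r2" and u: "0 \<le> u" and t: "0 \<le> t" and ut: "u + t = 1"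
    have cv: "h (u *\<^sub>R z1 + t *\<^sub>R z2) \<le> u * h z1 + t * h z2"
      using hc u t ut unfolding convex_on_def by blast
    have "u * (r1 - (h z1 - h xb)) + t * (r2 - (h z2 - h xb)) > 0"
    proof (cases "u = 0")
      case True thus ?thesis using ut r2 by simp
    next
      case False
      hence "u * (r1 - (h z1 - h xb)) > 0" using u r1 by simp
      moreover have "t * (r2 - (h z2 - h xb)) \<ge> 0" using t r2 by simp
      ultimately show ?thesis by linarith
    qed
    hence "u * r1 + t * r2 > u * h z1 + t * h z2 - (u + t) * h xb" by (simp add: algebra_simps)
    thus "h (u *\<^sub>R z1 + t *\<^sub>R z2) - h xb < u * r1 + t * r2" using cv ut by simp
  qed
  have cT: "convex T" unfolding T_def by (intro convex_Times S) simp
  have "(xb, 1) \<in> A" unfolding A_def by simp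
  hence nA: "A \<noteq> {}" by blast
  have nT: "T \<noteq> {}" unfolding T_def using xS by auto
  have dis: "A \<inter> T = {}" unfolding A_def T_def using mn by force
  obtain a b where a0: "a \<noteq> 0" and hA: "\<forall>p\<in>A. inner a p \<le> b" and hT: "\<forall>p\<in>T. inner a p \<ge> b"
    using separating_hyperplane_sets[OF cA cT nA nT dis] by blast
  obtain a1 a2 where aa: "a = (a1, a2)" by fastforce
  have A': "inner a1 z + a2 * r \<le> b" if "r > h z - h xb" for z r
    using hA[rule_format, of "(z, r)"] that by (simp add: A_def aa)
  have T': "inner a1 z + a2 * r \<ge> b" if "z \<in> S" "r \<le> 0" for z r
    using hT[rule_format, of "(z, r)"] that by (simp add: T_def aa)
  have a2le: "a2 \<le> 0"
  proof (rule ccontr)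
    assume "\<not> a2 \<le> 0"
    hence a2p: "a2 > 0" by simp
    define r where "r = max 1 ((b - inner a1 xb) / a2 + 1)"
    have "inner a1 xb + a2 * r \<le> b" using A'[of xb r] by (simp add: r_def)
    moreover have "a2 * r \<ge> a2 * ((b - inner a1 xb) / a2 + 1)"
      using a2p by (intro mult_left_mono) (auto simp: r_def)
    moreover have "a2 * ((b - inner a1 xb) / a2 + 1) = b - inner a1 xb + a2"
      using a2p by (simp add: field_simps)
    ultimately show False using a2p by linarith
  qed
  have a2ne: "a2 \<noteq> 0"
  proof
    assume a20: "a2 = 0"
    hence "inner a1 z \<le> b" for z using A'[of z "h z - h xb + 1"] by simp
    moreover have "a1 \<noteq> 0" using a0 a20 aa by (auto simp: zero_prod_def)
    ultimately show False
    proof -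
      assume H: "\<And>z. inner a1 z \<le> b" and a1: "a1 \<noteq> 0"
      define z where "z = ((\<bar>b\<bar> + 1) / (inner a1 a1)) *\<^sub>R a1"
      have "inner a1 a1 > 0" using a1 by simp
      hence "inner a1 z = \<bar>b\<bar> + 1" by (simp add: z_def inner_scaleR_right)
      thus False using H[of z] by simp
    qed
  qed
  hence a2n: "a2 < 0" using a2le by simp
  define c where "c = - a2"
  have cp: "c > 0" using a2n by (simp add: c_def)
  define g where "g = (1 / c) *\<^sub>R a1"
  have bx: "inner a1 xb \<le> b"
  proof -
    have "inner a1 xb \<le> b + e * c" if "e > 0" for e
      using A'[of xb e] that by (simp add: c_def algebra_simps)
    thus ?thesis using le_eps by blast
  qed
  have bx2: "inner a1 xb \<ge> b" using T'[OF xS, of 0] by simp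
  have sub: "h xb + inner g (z - xb) \<le> h z" for z
  proof -
    have "inner a1 (z - xb) \<le> c * (h z - h xb) + e * c" if "e > 0" for e
    proof -
      have "inner a1 z + a2 * (h z - h xb + e) \<le> b" using A'[of z "h z - h xb + e"] that by simp
      thus ?thesis using bx2 by (simp add: c_def inner_diff_right algebra_simps)
    qed
    hence "inner a1 (z - xb) \<le> c * (h z - h xb)" using le_eps by blast
    hence "(1 / c) * inner a1 (z - xb) \<le> h z - h xb" using cp by (simp add: field_simps)
    thus ?thesis by (simp add: g_def inner_scaleR_left)
  qed
  have nrm: "inner g (z - xb) \<ge> 0" if zS: "z \<in> S" for z
  proof -
    have "inner a1 z \<ge> b" using T'[OF zS, of 0] by simp
    hence "inner a1 (z - xb) \<ge> 0" using bx by (simp add: inner_diff_right)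
    thus ?thesis using cp by (simp add: g_def inner_scaleR_left)
  qed
  show ?thesis using sub nrm by blast
qed

lemma quad_scale: "inner (s *\<^sub>R d) ((Q::real^'n^'n) *v (s *\<^sub>R d)) = s * s * inner d (Q *v d)"
  by (simp add: matrix_vector_mult_scaleR inner_scaleR_left inner_scaleR_right)

lemma quad_comb:
  assumes sym: "transpose Q = Q" and ut: "u + t = 1"
  shows "inner (u *\<^sub>R a + t *\<^sub>R b) ((Q::real^'n^'n) *v (u *\<^sub>R a + t *\<^sub>R b))
        = u * inner a (Q *v a) + t * inner b (Q *v b) - u * t * inner (a - b) (Q *v (a - b))"
proof -
  have f1: "inner (Q *v (u *\<^sub>R a)) (t *\<^sub>R b) = u * t * inner (Q *v a) b"
    by (simp add: matrix_vector_mult_scaleR)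
  have e1: "inner (u *\<^sub>R a + t *\<^sub>R b) (Q *v (u *\<^sub>R a + t *\<^sub>R b))
     = u * u * inner a (Q *v a) + 2 * (u * t * inner (Q *v a) b) + t * t * inner b (Q *v b)"
    using quad_add[OF sym, of "u *\<^sub>R a" "t *\<^sub>R b"] unfolding f1 quad_scale .
  have e2: "inner ((a - b) + b) (Q *v ((a - b) + b)) = inner (a - b) (Q *v (a - b)) + 2 * inner (Q *v (a - b)) b + inner b (Q *v b)"
    using quad_add[OF sym, of "a - b" b] .
  have e4: "inner (Q *v (a - b)) b = inner (Q *v a) b - inner b (Q *v b)"
    by (simp add: matrix_vector_mult_diff_distrib inner_diff_left inner_diff_right inner_commute)
  have e3: "inner (a - b) (Q *v (a - b)) = inner a (Q *v a) - 2 * inner (Q *v a) b + inner b (Q *v b)"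
    using e2 e4 by simp
  have poly: "u*u*A + 2*(u*t*m) + t*t*B = u*A + t*B - u*t*(A - 2*m + B)" for A B m :: real
  proof -
    have t: "t = 1 - u" using ut by simp
    show ?thesis unfolding t by (simp add: algebra_simps)
  qed
  show ?thesis unfolding e1 e3 by (rule poly)
qed

lemma Fmodel_convex:
  fixes Q :: "real^'n^'n"
  assumes sym: "transpose Q = Q" and psd: "\<forall>z. 0 \<le> inner z (Q *v z)" and cv: "convex_on UNIV phi"
  shows "convex_on UNIV (Fmodel g0 phi xk xi Q)"
  unfolding convex_on_def
proof (intro conjI convex_UNIV ballI allI impI)
  fix a b :: "real^'n" and u t :: real
  assume u: "0 \<le> u" and t: "0 \<le> t" and ut: "u + t = 1"
  define a' where "a' = a - xk"
  define b' where "b' = b - xk"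
  have c: "u *\<^sub>R a + t *\<^sub>R b - xk = u *\<^sub>R a' + t *\<^sub>R b'"
  proof -
    have "xk = u *\<^sub>R xk + t *\<^sub>R xk" using ut by (simp add: scaleR_add_left[symmetric])
    hence "u *\<^sub>R a + t *\<^sub>R b - xk = u *\<^sub>R a + t *\<^sub>R b - (u *\<^sub>R xk + t *\<^sub>R xk)" by simp
    thus ?thesis by (simp add: a'_def b'_def scaleR_diff_right algebra_simps)
  qed
  have q: "inner (u *\<^sub>R a' + t *\<^sub>R b') (Q *v (u *\<^sub>R a' + t *\<^sub>R b')) \<le> u * inner a' (Q *v a') + t * inner b' (Q *v b')"
  proof -
    have "u * t * inner (a' - b') (Q *v (a' - b')) \<ge> 0" using u t psd by simp
    thus ?thesis unfolding quad_comb[OF sym ut] by linarith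
  qed
  have l: "inner xi (u *\<^sub>R a' + t *\<^sub>R b') = u * inner xi a' + t * inner xi b'"
    by (simp add: inner_add_right inner_scaleR_right)
  have p: "phi (u *\<^sub>R a + t *\<^sub>R b) \<le> u * phi a + t * phi b"
    using cv u t ut unfolding convex_on_def by blast
  have g: "g0 xk = u * g0 xk + t * g0 xk" using ut by (simp add: distrib_right[symmetric])
  have "Fmodel g0 phi xk xi Q (u *\<^sub>R a + t *\<^sub>R b)
      = g0 xk + inner xi (u *\<^sub>R a' + t *\<^sub>R b') + 1/2 * inner (u *\<^sub>R a' + t *\<^sub>R b') (Q *v (u *\<^sub>R a' + t *\<^sub>R b')) + phi (u *\<^sub>R a + t *\<^sub>R b)"
    unfolding Fmodel_def c ..
  also have "\<dots> \<le> (u * g0 xk + t * g0 xk) + (u * inner xi a' + t * inner xi b') + 1/2 * (u * inner a' (Q *v a') + t * inner b' (Q *v b')) + (u * phi a + t * phi b)"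
    using mult_left_mono[OF q, of "1/2"] l p g by linarith
  also have "\<dots> = u * Fmodel g0 phi xk xi Q a + t * Fmodel g0 phi xk xi Q b"
    unfolding Fmodel_def a'_def b'_def by (simp add: algebra_simps)
  finally show "Fmodel g0 phi xk xi Q (u *\<^sub>R a + t *\<^sub>R b) \<le> u * Fmodel g0 phi xk xi Q a + t * Fmodel g0 phi xk xi Q b" .
qed

lemma Gmaj_set_convex:
  fixes g :: "real^'n \<Rightarrow> real^'m"
  assumes L: "\<forall>i. L $ i \<ge> 0"
  shows "convex {z. Gmaj g z s V L \<in> nonpos}"
  unfolding convex_def
proof (intro ballI allI impI CollectI)
  fix a b :: "real^'n" and u t :: real
  assume aS: "a \<in> {z. Gmaj g z s V L \<in> nonpos}" and bS: "b \<in> {z. Gmaj g z s V L \<in> nonpos}"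
    and u: "0 \<le> u" and t: "0 \<le> t" and ut: "u + t = 1"
  show "Gmaj g (u *\<^sub>R a + t *\<^sub>R b) s V L \<in> nonpos"
    unfolding nonpos_def
  proof (intro CollectI allI)
    fix i
    have ga: "Gmaj g a s V L $ i \<le> 0" and gb: "Gmaj g b s V L $ i \<le> 0" using aS bS by (auto simp: nonpos_def)
    define a' where "a' = a - s"
    define b' where "b' = b - s"
    have c: "u *\<^sub>R a + t *\<^sub>R b - s = u *\<^sub>R a' + t *\<^sub>R b'"
    proof -
      have "s = u *\<^sub>R s + t *\<^sub>R s" using ut by (simp add: scaleR_add_left[symmetric])
      hence "u *\<^sub>R a + t *\<^sub>R b - s = u *\<^sub>R a + t *\<^sub>R b - (u *\<^sub>R s + t *\<^sub>R s)" by simp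
      thus ?thesis by (simp add: a'_def b'_def scaleR_diff_right algebra_simps)
    qed
    have n: "(norm (u *\<^sub>R a' + t *\<^sub>R b'))\<^sup>2 \<le> u * (norm a')\<^sup>2 + t * (norm b')\<^sup>2"
    proof -
      have "u * t * (norm (a' - b'))\<^sup>2 \<ge> 0" using u t by simp
      thus ?thesis using nsq_comb[OF ut, of a' b'] by linarith
    qed
    have n2: "1/2 * (norm (u *\<^sub>R a' + t *\<^sub>R b'))\<^sup>2 * L $ i \<le> 1/2 * (u * (norm a')\<^sup>2 + t * (norm b')\<^sup>2) * L $ i"
      using n L by (intro mult_right_mono) auto
    have l: "inner (V $ i) (u *\<^sub>R a' + t *\<^sub>R b') = u * inner (V $ i) a' + t * inner (V $ i) b'"
      by (simp add: inner_add_right inner_scaleR_right)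
    have g: "g s $ i = u * g s $ i + t * g s $ i" using ut by (simp add: distrib_right[symmetric])
    have "Gmaj g (u *\<^sub>R a + t *\<^sub>R b) s V L $ i = g s $ i + inner (V $ i) (u *\<^sub>R a' + t *\<^sub>R b') + 1/2 * (norm (u *\<^sub>R a' + t *\<^sub>R b'))\<^sup>2 * L $ i"
      unfolding Gmaj_comp c ..
    also have "\<dots> \<le> (u * g s $ i + t * g s $ i) + (u * inner (V $ i) a' + t * inner (V $ i) b') + 1/2 * (u * (norm a')\<^sup>2 + t * (norm b')\<^sup>2) * L $ i"
      using n2 l g by linarith
    also have "\<dots> = u * Gmaj g a s V L $ i + t * Gmaj g b s V L $ i"
      unfolding Gmaj_comp a'_def b'_def by (simp add: algebra_simps)
    also have "\<dots> \<le> 0" using ga gb u t by (simp add: add_nonpos_nonpos mult_nonneg_nonpos)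
    finally show "Gmaj g (u *\<^sub>R a + t *\<^sub>R b) s V L $ i \<le> 0" .
  qed
qed

lemma Q_entry_bound:
  assumes sym: "transpose Q = Q" and bnd: "\<forall>z. 0 \<le> inner z (Q *v z) \<and> inner z (Q *v z) \<le> c * (norm z)\<^sup>2"
    and c: "c \<ge> 0"
  shows "\<bar>(Q::real^'n^'n) $ i $ j\<bar> \<le> c"
proof -
  define a where "a = axis i (1::real)"
  define b where "b = axis j (1::real)"
  have qij: "Q $ i $ j = inner a (Q *v b)"
    by (simp add: a_def b_def inner_axis' mv_component inner_axis)
  have p: "inner (a + b) (Q *v (a + b)) = inner a (Q *v a) + 2 * inner (Q *v a) b + inner b (Q *v b)"
    by (rule quad_add[OF sym])
  have m: "inner (a + (- b)) (Q *v (a + (- b))) = inner a (Q *v a) + 2 * inner (Q *v a) (- b) + inner (- b) (Q *v (- b))"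
    by (rule quad_add[OF sym])
  have neg: "Q *v (- b) = - (Q *v b)"
    using matrix_vector_mult_diff_distrib[of Q 0 b] by simp
  have m2: "inner (a - b) (Q *v (a - b)) = inner a (Q *v a) - 2 * inner (Q *v a) b + inner b (Q *v b)"
    using m neg by simp
  have sy: "inner (Q *v a) b = inner a (Q *v b)" using inner_sym_Q[OF sym, of b a] by (simp add: inner_commute)
  have n1: "(norm (a + b))\<^sup>2 \<le> 4"
  proof -
    have "norm (a + b) \<le> norm a + norm b" by (rule norm_triangle_ineq)
    also have "\<dots> = 2" by (simp add: a_def b_def)
    finally have "norm (a + b) \<le> 2" .
    hence "(norm (a + b))\<^sup>2 \<le> 2\<^sup>2" by (intro power_mono) auto
    thus ?thesis by simp
  qed
  have n2: "(norm (a - b))\<^sup>2 \<le> 4"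
  proof -
    have "norm (a - b) \<le> norm a + norm b" by (rule norm_triangle_ineq4)
    also have "\<dots> = 2" by (simp add: a_def b_def)
    finally have "norm (a - b) \<le> 2" .
    hence "(norm (a - b))\<^sup>2 \<le> 2\<^sup>2" by (intro power_mono) auto
    thus ?thesis by simp
  qed
  have b1: "inner (a + b) (Q *v (a + b)) \<le> 4 * c"
  proof -
    have "inner (a + b) (Q *v (a + b)) \<le> c * (norm (a + b))\<^sup>2" using bnd by blast
    also have "\<dots> \<le> c * 4" using mult_left_mono[OF n1 c] .
    finally show ?thesis by simp
  qed
  have b2: "inner (a - b) (Q *v (a - b)) \<le> 4 * c"
  proof -
    have "inner (a - b) (Q *v (a - b)) \<le> c * (norm (a - b))\<^sup>2" using bnd by blast
    also have "\<dots> \<le> c * 4" using mult_left_mono[OF n2 c] .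
    finally show ?thesis by simp
  qed
  have b3: "inner (a + b) (Q *v (a + b)) \<ge> 0" "inner (a - b) (Q *v (a - b)) \<ge> 0" using bnd by auto
  have "4 * inner a (Q *v b) = inner (a + b) (Q *v (a + b)) - inner (a - b) (Q *v (a - b))"
    using p m2 sy by simp
  hence "\<bar>4 * inner a (Q *v b)\<bar> \<le> 4 * c" using b1 b2 b3 by linarith
  thus ?thesis unfolding qij by simp
qed

lemma norm_le_sum_cart: "norm (x::'a::real_normed_vector^'n) \<le> (\<Sum>i\<in>UNIV. norm (x $ i))"
  by (simp add: norm_vec_def L2_set_le_sum)

lemma Q_norm_bound:
  assumes sym: "transpose Q = Q" and bnd: "\<forall>z. 0 \<le> inner z (Q *v z) \<and> inner z (Q *v z) \<le> c * (norm z)\<^sup>2"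
    and c: "c \<ge> 0"
  shows "norm (Q::real^'n^'n) \<le> real CARD('n) * (real CARD('n) * c)"
proof -
  have "norm Q \<le> (\<Sum>i\<in>UNIV. norm (Q $ i))" by (rule norm_le_sum_cart)
  also have "\<dots> \<le> (\<Sum>i\<in>(UNIV::'n set). real CARD('n) * c)"
  proof (rule sum_mono)
    fix i :: 'n
    have "norm (Q $ i) \<le> (\<Sum>j\<in>UNIV. \<bar>Q $ i $ j\<bar>)" by (rule norm_le_l1_cart)
    also have "\<dots> \<le> (\<Sum>j\<in>(UNIV::'n set). c)" using Q_entry_bound[OF sym bnd c] by (intro sum_mono) auto
    also have "\<dots> = real CARD('n) * c" by simp
    finally show "norm (Q $ i) \<le> real CARD('n) * c" .
  qed
  also have "\<dots> = real CARD('n) * (real CARD('n) * c)" by simp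
  finally show ?thesis .
qed

lemma dir_subgrad:
  assumes cv: "convex_on UNIV phi"
    and H: "\<And>z. phi z - phi xb \<ge> inner vb (z - xb) - 1/2 * inner (z - xb) ((Q::real^'n^'n) *v (z - xb))"
  shows "phi w \<ge> phi xb + inner vb (w - xb)"
proof -
  define d where "d = w - xb"
  define K where "K = \<bar>inner d (Q *v d)\<bar> / 2"
  have "inner vb d \<le> (phi w - phi xb) + e * K" if e: "e > 0" for e
  proof -
    define s where "s = min e 1"
    have s0: "s > 0" and s1: "s \<le> 1" and se: "s \<le> e" using e by (auto simp: s_def)
    define z where "z = (1 - s) *\<^sub>R xb + s *\<^sub>R w"
    have zx: "z - xb = s *\<^sub>R d" by (simp add: z_def d_def algebra_simps)
    have c1: "phi z \<le> (1 - s) * phi xb + s * phi w"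
      using convex_onD[OF cv, of s xb w] s0 s1 unfolding z_def by simp
    have c2: "phi z - phi xb \<ge> s * inner vb d - 1/2 * (s * s * inner d (Q *v d))"
      using H[of z] unfolding zx quad_scale by (simp add: inner_scaleR_right)
    have "s * inner vb d - 1/2 * (s * s * inner d (Q *v d)) \<le> s * (phi w - phi xb)"
      using c1 c2 by (simp add: algebra_simps)
    hence c3: "s * inner vb d \<le> s * (phi w - phi xb) + s * (s * (inner d (Q *v d) / 2))"
      by (simp add: algebra_simps)
    have "s * (inner d (Q *v d) / 2) \<le> e * K"
    proof -
      have "s * (inner d (Q *v d) / 2) \<le> s * K" using s0 by (intro mult_left_mono) (auto simp: K_def)
      also have "\<dots> \<le> e * K" using se by (intro mult_right_mono) (auto simp: K_def)
      finally show ?thesis .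
    qed
    hence "s * (s * (inner d (Q *v d) / 2)) \<le> s * (e * K)" using s0 by (intro mult_left_mono) auto
    hence "s * inner vb d \<le> s * (phi w - phi xb) + s * (e * K)" using c3 by linarith
    hence "s * inner vb d \<le> s * ((phi w - phi xb) + e * K)" by (simp add: distrib_left)
    thus ?thesis using s0 by (rule mult_left_le_imp_le)
  qed
  hence "inner vb d \<le> phi w - phi xb" using le_eps by blast
  thus ?thesis by (simp add: d_def)
qed

lemma mv_norm_bound:
  fixes A :: "real^'n^'m"
  assumes "\<And>i j. abs(A$i$j) \<le> B"
  shows "norm (A *v x) \<le> real (CARD('m)) * real (CARD('n)) * B * norm x"
proof -
  have "norm (A *v x) \<le> (\<Sum>i\<in>UNIV. \<bar>(A *v x) $ i\<bar>)"
    by (rule norm_le_l1_cart)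
  also have "\<dots> \<le> (\<Sum>i::'m \<in>UNIV. real (CARD('n)) * B * norm x)"
  proof (rule sum_mono)
    fix i
    have "\<bar>(A *v x) $ i\<bar> \<le> norm(A $ i) * norm x"
      by (simp add: matrix_mult_dot Cauchy_Schwarz_ineq2)
    also have "\<dots> \<le> (\<Sum>j\<in>UNIV. \<bar>A $ i $ j\<bar>) * norm x"
      by (simp add: mult_right_mono norm_le_l1_cart)
    also have "\<dots> \<le> real (CARD('n)) * B * norm x"
      by (simp add: assms sum_bounded_above mult_right_mono)
    finally show "\<bar>(A *v x) $ i\<bar> \<le> real (CARD('n)) * B * norm x" .
  qed
  also have "\<dots> \<le> CARD('m) * real (CARD('n)) * B * norm x"
    by simp
  finally show ?thesis .
qed

lemma loc_lip_isCont:
  fixes f :: "'a::euclidean_space \<Rightarrow> real"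
  assumes "loc_lipschitz_at f z"
  shows "isCont f z"
proof -
  obtain d K where d: "d > 0" and L: "\<forall>a\<in>ball z d. \<forall>b\<in>ball z d. \<bar>f a - f b\<bar> \<le> K * norm (a - b)"
    using assms unfolding loc_lipschitz_at_def by blast
  show ?thesis unfolding continuous_at_eps_delta
  proof (intro allI impI)
    fix e :: real assume e: "e > 0"
    define \<delta> where "\<delta> = min d (e / (\<bar>K\<bar> + 1))"
    have dp: "\<delta> > 0" using d e by (simp add: \<delta>_def)
    have "\<forall>w. dist w z < \<delta> \<longrightarrow> dist (f w) (f z) < e"
    proof (intro allI impI)
      fix w assume w: "dist w z < \<delta>"
      have wb: "w \<in> ball z d" using w by (simp add: \<delta>_def dist_commute)
      have zb: "z \<in> ball z d" using d by simp
      have "\<bar>f w - f z\<bar> \<le> K * norm (w - z)" using L wb zb by blast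
      also have "\<dots> \<le> \<bar>K\<bar> * norm (w - z)" by (intro mult_right_mono) auto
      also have "\<dots> \<le> \<bar>K\<bar> * \<delta>" using w by (intro mult_left_mono) (auto simp: dist_norm)
      also have "\<dots> \<le> \<bar>K\<bar> * (e / (\<bar>K\<bar> + 1))" by (intro mult_left_mono) (auto simp: \<delta>_def)
      also have "\<dots> < e"
      proof -
        have "\<bar>K\<bar> * (e / (\<bar>K\<bar> + 1)) = e * (\<bar>K\<bar> / (\<bar>K\<bar> + 1))" by simp
        also have "\<dots> < e * 1" using e by (intro mult_strict_left_mono) auto
        finally show ?thesis by simp
      qed
      finally show "dist (f w) (f z) < e" by (simp add: dist_real_def)
    qed
    thus "\<exists>d>0. \<forall>x'. dist x' z < d \<longrightarrow> dist (f x') (f z) < e" using dp by blast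
  qed
qed

lemma inner_nonneg_nonpos:
  assumes "lam \<in> nonneg" "(z::real^'m) \<in> nonpos"
  shows "inner lam z \<le> 0"
proof -
  have "inner lam z = (\<Sum>i\<in>UNIV. lam $ i * z $ i)" by (simp add: inner_vec_def)
  also have "\<dots> \<le> (\<Sum>i\<in>(UNIV::'m set). 0)"
    using assms by (intro sum_mono) (auto simp: nonneg_def nonpos_def mult_nonneg_nonpos)
  finally show ?thesis by simp
qed

lemma inner_compl_zero:
  assumes "\<forall>i. lam $ i * (z::real^'m) $ i = 0"
  shows "inner lam z = 0"
proof -
  have "inner lam z = (\<Sum>i\<in>UNIV. lam $ i * z $ i)" by (simp add: inner_vec_def)
  also have "\<dots> = (\<Sum>i\<in>(UNIV::'m set). 0)" using assms by (intro sum.cong) auto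
  finally show ?thesis by simp
qed

lemma inner_le_bound:
  assumes "\<forall>i. lam $ i \<ge> 0" "\<forall>i. (z::real^'m) $ i \<le> a" "a \<ge> 0"
  shows "inner lam z \<le> real CARD('m) * norm lam * a"
proof -
  have "inner lam z = (\<Sum>i\<in>UNIV. lam $ i * z $ i)" by (simp add: inner_vec_def)
  also have "\<dots> \<le> (\<Sum>i\<in>(UNIV::'m set). norm lam * a)"
  proof (intro sum_mono)
    fix i
    have "lam $ i * z $ i \<le> lam $ i * a" using assms by (intro mult_left_mono) auto
    also have "\<dots> \<le> norm lam * a" using assms component_le_norm_cart[of lam i]
      by (intro mult_right_mono) auto
    finally show "lam $ i * z $ i \<le> norm lam * a" .
  qed
  also have "\<dots> = real CARD('m) * norm lam * a" by simp
  finally show ?thesis .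
qed

lemma norm_inf_pos_part_ge:
  shows "norm_inf (pos_part (z::real^'m)) \<ge> z $ i" "norm_inf (pos_part z) \<ge> 0"
proof -
  have fin: "finite (range (\<lambda>i. \<bar>pos_part z $ i\<bar>))" by simp
  have "\<bar>pos_part z $ i\<bar> \<le> norm_inf (pos_part z)"
    unfolding norm_inf_def by (rule Max_ge[OF fin]) simp
  moreover have "z $ i \<le> \<bar>pos_part z $ i\<bar>" by (simp add: pos_part_def)
  ultimately show "norm_inf (pos_part z) \<ge> z $ i" by linarith
  show "norm_inf (pos_part z) \<ge> 0" using \<open>\<bar>pos_part z $ i\<bar> \<le> norm_inf (pos_part z)\<close> by linarith
qed

theorem proposition4p2:
  fixes g0 :: "real^'n::finite \<Rightarrow> real"
    and g :: "real^'n \<Rightarrow> real^'m::finite"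
    and phi :: "real^'n \<Rightarrow> real"
    and Oset :: "(real^'n) set"
    and mumin mumax Lmin Lmax M betaC betaS alpha tau :: real
    and x :: "nat \<Rightarrow> real^'n"
    and xi :: "nat \<Rightarrow> real^'n"
    and V :: "nat \<Rightarrow> real^'n^'m"
    and mu :: "nat \<Rightarrow> nat \<Rightarrow> real"
    and L :: "nat \<Rightarrow> nat \<Rightarrow> real^'m"
    and Q :: "nat \<Rightarrow> nat \<Rightarrow> real^'n^'n"
    and y v xbar :: "nat \<Rightarrow> nat \<Rightarrow> real^'n"
    and lam :: "nat \<Rightarrow> nat \<Rightarrow> real^'m"
    and jk :: "nat \<Rightarrow> nat"
  \<comment> \<open>Assumption 1 (standing)\<close>
  assumes O_open: "open Oset" and O_convex: "convex Oset" and Gamma_sub: "feas g \<subseteq> Oset"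
    and Gamma_ne: "feas g \<noteq> {}"
    and g0_lip: "\<forall>z\<in>Oset. loc_lipschitz_at g0 z" and g0_uC2: "\<forall>z\<in>Oset. upper_C2_at g0 z"
    and g_lip: "\<forall>i z. loc_lipschitz_at (\<lambda>w. g w $ i) z"
    and g_uC2: "\<forall>i z. upper_C2_at (\<lambda>w. g w $ i) z"
    and phi_convex: "convex_on UNIV phi"
    and F_bdd: "\<exists>c. \<forall>z\<in>feas g. Fobj g0 g phi z \<ge> ereal c"
  \<comment> \<open>parameters of iMBA\<close>
    and par_mu: "0 < mumin" "mumin \<le> mumax"
    and par_L: "0 < Lmin" "Lmin \<le> Lmax"
    and par_pos: "M > 0" "betaC > 0" "betaS > 0" "alpha > 0"
    and par_tau: "tau > 1"
    and x0_feas: "x 0 \<in> feas g"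
  \<comment> \<open>iMBA: outer choices\<close>
    and xi_sub: "\<forall>k. xi k \<in> limiting_subdiff g0 (x k)"
    and V_sub: "\<forall>k i. V k $ i \<in> limiting_subdiff (\<lambda>w. g w $ i) (x k)"
    and mu0: "\<forall>k. mumin \<le> mu k 0 \<and> mu k 0 \<le> mumax"
    and L0: "\<forall>k i. Lmin \<le> L k 0 $ i \<and> L k 0 $ i \<le> Lmax"
  \<comment> \<open>iMBA: inner iterations j = 0, ..., jk k\<close>
    and Q_sa: "\<forall>k j. j \<le> jk k \<longrightarrow> transpose (Q k j) = Q k j"
    and Q_bnd: "\<forall>k j. j \<le> jk k \<longrightarrow> (\<forall>z. mu k j * (norm z)\<^sup>2 \<le> inner z (Q k j *v z)
                   \<and> inner z (Q k j *v z) \<le> (mu k j + M) * (norm z)\<^sup>2)"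
    and xbar_min: "\<forall>k j. j \<le> jk k \<longrightarrow>
          Gmaj g (xbar k j) (x k) (V k) (L k j) \<in> nonpos \<and>
          (\<forall>z. Gmaj g z (x k) (V k) (L k j) \<in> nonpos \<longrightarrow>
             Fmodel g0 phi (x k) (xi k) (Q k j) (xbar k j) \<le> Fmodel g0 phi (x k) (xi k) (Q k j) z)"
    and v_sub: "\<forall>k j. j \<le> jk k \<longrightarrow> v k j \<in> limiting_subdiff phi (y k j)"
    and lam_nonneg: "\<forall>k j. j \<le> jk k \<longrightarrow> lam k j \<in> nonneg"
    and y_descent: "\<forall>k j. j \<le> jk k \<longrightarrow>
          Fmodel g0 phi (x k) (xi k) (Q k j) (y k j) \<le> Fmodel g0 phi (x k) (xi k) (Q k j) (x k)"
    and y_feas_inexact: "\<forall>k j. j \<le> jk k \<longrightarrow>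
          max (- inner (lam k j) (Gmaj g (y k j) (x k) (V k) (L k j))) 0
          + norm_inf (pos_part (Gmaj g (y k j) (x k) (V k) (L k j)))
          \<le> betaC / 2 * (norm (y k j - x k))\<^sup>2"
    and y_stat_inexact: "\<forall>k j. j \<le> jk k \<longrightarrow>
          norm (xi k + Q k j *v (y k j - x k) + v k j + transpose (V k) *v lam k j
                + inner (L k j) (lam k j) *\<^sub>R (y k j - x k))
          \<le> betaS * norm (y k j - x k)"
  \<comment> \<open>iMBA: acceptance test and updates\<close>
    and accept: "\<forall>k. g (y k (jk k)) \<in> nonpos \<and>
          Fobj g0 g phi (y k (jk k)) \<le> Fobj g0 g phi (x k) - ereal (alpha / 2 * (norm (y k (jk k) - x k))\<^sup>2)"
    and reject: "\<forall>k j. j < jk k \<longrightarrow> \<not> (g (y k j) \<in> nonpos \<and>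
          Fobj g0 g phi (y k j) \<le> Fobj g0 g phi (x k) - ereal (alpha / 2 * (norm (y k j - x k))\<^sup>2))"
    and upd_infeas: "\<forall>k j. j < jk k \<longrightarrow> g (y k j) \<notin> nonpos \<longrightarrow>
          L k (Suc j) = tau *\<^sub>R L k j \<and> mu k (Suc j) = mu k j"
    and upd_feas: "\<forall>k j. j < jk k \<longrightarrow> g (y k j) \<in> nonpos \<longrightarrow>
          L k (Suc j) = L k j \<and> mu k (Suc j) = tau * mu k j"
    and x_next: "\<forall>k. x (Suc k) = y k (jk k)"
  \<comment> \<open>Assumption 2\<close>
    and A2: "\<forall>k j. j \<le> jk k \<longrightarrow>
          metric_subregular (\<lambda>z. {Gmaj g z (x k) (V k) (L k j) - w | w. w \<in> nonpos}) (xbar k j) 0"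
  \<comment> \<open>Assumption 3\<close>
    and A3: "bounded (range x)"
  \<comment> \<open>Assumption 4, with u^k = (x^k, L^k, V^k, xi^k, Q_k) and xbar^k = xbar^{k, jk k}\<close>
    and A4: "\<forall>us xs. cluster_point (\<lambda>k. ((x k, L k (jk k), V k, xi k, Q k (jk k)), xbar k (jk k))) (us, xs)
               \<longrightarrow> partial_BMP g us xs"
  shows "\<exists>khat. \<exists>gam>0. \<forall>k\<ge>khat. norm (x (Suc k) - xbar k (jk k)) \<le> gam * norm (x (Suc k) - x k)"
proof -
  have mu_ge: "mu k j \<ge> mumin" if "j \<le> jk k" for k j
    using that
  proof (induction j)
    case 0 thus ?case using mu0 by auto
  next
    case (Suc j)
    hence jl: "j < jk k" by simp
    have ih: "mu k j \<ge> mumin" using Suc.IH jl by simp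
    have mpos: "mu k j > 0" using ih par_mu by linarith
    show ?case
    proof (cases "g (y k j) \<in> nonpos")
      case True
      hence e: "mu k (Suc j) = tau * mu k j" using upd_feas jl by blast
      have "mu k j \<le> tau * mu k j" using mpos par_tau by (simp add: mult_le_cancel_right1)
      thus ?thesis using e ih by linarith
    next
      case False
      hence "mu k (Suc j) = mu k j" using upd_infeas jl by blast
      thus ?thesis using ih by simp
    qed
  qed
  have x_feas: "x k \<in> feas g" for k
  proof (cases k)
    case 0 thus ?thesis using x0_feas by simp
  next
    case (Suc k') thus ?thesis using accept x_next unfolding feas_def by simp
  qed
  have Fobj_feas: "Fobj g0 g phi z = ereal (g0 z + phi z)" if "g z \<in> nonpos" for z
    using that by (simp add: Fobj_def)
  obtain Bx where Bx: "\<And>k. norm (x k) \<le> Bx" using A3 unfolding bounded_iff by auto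
  have Bx0: "Bx \<ge> 0" using Bx[of 0] norm_ge_zero[of "x 0"] by linarith
  have gi_cont: "continuous_on UNIV (\<lambda>w. g w $ i)" for i
  proof -
    have "isCont (\<lambda>w. g w $ i) z" for z using g_lip by (intro loc_lip_isCont) simp
    thus ?thesis by (intro continuous_at_imp_continuous_on) simp
  qed
  have feas_closed: "closed (feas g)"
  proof -
    have "feas g = (\<Inter>i. {w. g w $ i \<le> 0})" by (auto simp: feas_def nonpos_def)
    moreover have "closed {w. g w $ i \<le> 0}" for i
      using closed_Collect_le[OF gi_cont continuous_on_const] by simp
    ultimately show ?thesis by (simp add: closed_INT)
  qed
  define K1 where "K1 = closure (range x)"
  have K1c: "compact K1" unfolding K1_def by (rule compact_closure[THEN iffD2, OF A3])
  have K1f: "K1 \<subseteq> feas g" unfolding K1_def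
  proof (rule closure_minimal)
    show "range x \<subseteq> feas g" using x_feas by blast
    show "closed (feas g)" by (rule feas_closed)
  qed
  have K1O: "K1 \<subseteq> Oset" using K1f Gamma_sub by (rule order_trans)
  have xK1: "x k \<in> K1" for k unfolding K1_def using closure_subset[of "range x"] rangeI[of x k] by (rule subsetD)
  have "\<forall>z\<in>K1. loc_lipschitz_at g0 z" using g0_lip K1O by blast
  hence "\<exists>c. \<forall>z\<in>K1. \<forall>v\<in>limiting_subdiff g0 z. norm v \<le> c"
    by (rule uniform_lip_bound[OF K1c])
  then obtain Bxi where Bxi: "\<forall>z\<in>K1. \<forall>v\<in>limiting_subdiff g0 z. norm v \<le> Bxi" by blast
  have xib: "norm (xi k) \<le> Bxi" for k using Bxi xK1 xi_sub by blast
  have Bxi0: "Bxi \<ge> 0" using xib[of 0] norm_ge_zero[of "xi 0"] by linarith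
  have "\<forall>i. \<exists>c. \<forall>z\<in>K1. \<forall>v\<in>limiting_subdiff (\<lambda>w. g w $ i) z. norm v \<le> c"
  proof
    fix i
    have "\<forall>z\<in>K1. loc_lipschitz_at (\<lambda>w. g w $ i) z" using g_lip by blast
    thus "\<exists>c. \<forall>z\<in>K1. \<forall>v\<in>limiting_subdiff (\<lambda>w. g w $ i) z. norm v \<le> c"
      by (rule uniform_lip_bound[OF K1c])
  qed
  hence "\<exists>BVf. \<forall>i. \<forall>z\<in>K1. \<forall>v\<in>limiting_subdiff (\<lambda>w. g w $ i) z. norm v \<le> BVf i"
    by (rule choice)
  then obtain BVf where BVf: "\<forall>i. \<forall>z\<in>K1. \<forall>v\<in>limiting_subdiff (\<lambda>w. g w $ i) z. norm v \<le> BVf i" by blast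
  have Vib: "norm (V k $ i) \<le> BVf i" for k i using BVf xK1 V_sub by blast
  have Vb: "norm (V k) \<le> (\<Sum>i\<in>UNIV. BVf i)" for k
  proof -
    have "norm (V k) \<le> (\<Sum>i\<in>UNIV. norm (V k $ i))" by (rule norm_le_sum_cart)
    also have "\<dots> \<le> (\<Sum>i\<in>UNIV. BVf i)" using Vib by (intro sum_mono) auto
    finally show ?thesis .
  qed
  obtain Bphi where Bphi: "\<And>z. norm z \<le> Bx + 1 \<Longrightarrow> \<bar>phi z\<bar> \<le> Bphi"
    using convex_bounded_ball[OF phi_convex, of "Bx + 1"] by blast
  have Bphi0: "Bphi \<ge> 0" using Bphi[of 0] Bx0 by simp
  define Ry where "Ry = max 1 (2 * (Bxi + 2 * Bphi) / mumin)"
  have Ry1: "Ry \<ge> 1" by (simp add: Ry_def)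
  have descent_bound: "norm (z - x k) \<le> Ry"
    if jk: "j \<le> jk k" and dz: "Fmodel g0 phi (x k) (xi k) (Q k j) z \<le> Fmodel g0 phi (x k) (xi k) (Q k j) (x k)" for k j z
  proof (cases "norm (z - x k) \<le> 1")
    case True thus ?thesis by (simp add: Ry_def)
  next
    case False
    define t where "t = norm (z - x k)"
    have t1: "t > 1" using False by (simp add: t_def)
    have sym: "transpose (Q k j) = Q k j" using Q_sa jk by blast
    have fd: "Fmodel g0 phi (x k) (xi k) (Q k j) z - Fmodel g0 phi (x k) (xi k) (Q k j) (x k)
       = inner (xi k) (z - x k) + 1/2 * inner (z - x k) (Q k j *v (z - x k)) + phi z - phi (x k)"
      using Fmodel_diff[OF sym, of g0 phi "x k" "xi k" z "x k"] by simp
    have q: "inner (z - x k) (Q k j *v (z - x k)) \<ge> mu k j * t\<^sup>2" using Q_bnd jk by (simp add: t_def)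
    have q2: "mu k j * t\<^sup>2 \<ge> mumin * t\<^sup>2" using mu_ge[OF jk] by (intro mult_right_mono) auto
    have ph: "phi z - phi (x k) \<ge> - 2 * Bphi * t"
      using convex_growth[OF phi_convex, of Bx Bphi "x k" z] Bphi Bx False by (simp add: t_def)
    have ph2: "phi z - phi (x k) \<ge> - (2 * (Bphi * t))" using ph by (simp add: mult.assoc)
    have xi2: "inner (xi k) (z - x k) \<ge> - (Bxi * t)"
    proof -
      have "\<bar>inner (xi k) (z - x k)\<bar> \<le> norm (xi k) * t" unfolding t_def by (rule Cauchy_Schwarz_ineq2)
      also have "\<dots> \<le> Bxi * t" using xib t1 by (intro mult_right_mono) auto
      finally show ?thesis by linarith
    qed
    have "1/2 * inner (z - x k) (Q k j *v (z - x k)) \<ge> 1/2 * (mumin * t\<^sup>2)" using q q2 by linarith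
    hence "mumin * t\<^sup>2 \<le> 2 * (Bxi * t) + 4 * (Bphi * t)" using fd dz xi2 ph2 by linarith
    hence "(mumin * t) * t \<le> (2 * (Bxi + 2 * Bphi)) * t" by (simp add: power2_eq_square algebra_simps)
    hence "mumin * t \<le> 2 * (Bxi + 2 * Bphi)" using t1 by (simp add: mult_le_cancel_right)
    hence "t \<le> 2 * (Bxi + 2 * Bphi) / mumin" using par_mu by (simp add: pos_le_divide_eq mult.commute)
    thus ?thesis by (simp add: Ry_def t_def)
  qed
  have yb: "norm (y k j - x k) \<le> Ry" if "j \<le> jk k" for k j
    using descent_bound[OF that] y_descent that by blast
  have xbb: "norm (xbar k j - x k) \<le> Ry" if "j \<le> jk k" for k j
  proof -
    have "Gmaj g (x k) (x k) (V k) (L k j) \<in> nonpos" using x_feas[of k] by (simp add: Gmaj_def feas_def)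
    hence "Fmodel g0 phi (x k) (xi k) (Q k j) (xbar k j) \<le> Fmodel g0 phi (x k) (xi k) (Q k j) (x k)"
      using xbar_min that by blast
    thus ?thesis using descent_bound[OF that] by blast
  qed
  define R2 where "R2 = Bx + Ry"
  define K2 where "K2 = cball (0::real^'n) R2"
  have K2c: "compact K2" "convex K2" by (simp_all add: K2_def)
  have xK2: "x k \<in> K2" for k using Bx[of k] Ry1 by (simp add: K2_def R2_def)
  have ynorm: "norm (y k j) \<le> R2" if "j \<le> jk k" for k j
  proof -
    have "norm (y k j) \<le> norm (x k) + norm (y k j - x k)" by (rule norm_triangle_sub)
    thus ?thesis using Bx[of k] yb[OF that] by (simp add: R2_def)
  qed
  have yK2: "y k j \<in> K2" if "j \<le> jk k" for k j using ynorm[OF that] by (simp add: K2_def)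
  have "\<forall>i. \<exists>\<rho>\<ge>0. \<forall>a\<in>K2. \<forall>b\<in>K2. \<forall>v\<in>limiting_subdiff (\<lambda>w. g w $ i) a.
            g b $ i \<le> g a $ i + inner v (b - a) + \<rho>/2 * (norm (b - a))\<^sup>2"
  proof
    fix i
    have "\<forall>z\<in>K2. upper_C2_at (\<lambda>w. g w $ i) z" using g_uC2 by blast
    thus "\<exists>\<rho>\<ge>0. \<forall>a\<in>K2. \<forall>b\<in>K2. \<forall>v\<in>limiting_subdiff (\<lambda>w. g w $ i) a.
            g b $ i \<le> g a $ i + inner v (b - a) + \<rho>/2 * (norm (b - a))\<^sup>2"
      by (rule uc2_global[OF K2c])
  qed
  hence "\<exists>\<rho>f. \<forall>i. \<rho>f i \<ge> 0 \<and> (\<forall>a\<in>K2. \<forall>b\<in>K2. \<forall>v\<in>limiting_subdiff (\<lambda>w. g w $ i) a.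
            g b $ i \<le> g a $ i + inner v (b - a) + \<rho>f i/2 * (norm (b - a))\<^sup>2)"
    by (rule choice)
  then obtain \<rho>f where \<rho>f: "\<forall>i. \<rho>f i \<ge> 0 \<and> (\<forall>a\<in>K2. \<forall>b\<in>K2. \<forall>v\<in>limiting_subdiff (\<lambda>w. g w $ i) a.
            g b $ i \<le> g a $ i + inner v (b - a) + \<rho>f i/2 * (norm (b - a))\<^sup>2)" by blast
  define \<rho>g where "\<rho>g = (\<Sum>i\<in>UNIV. \<rho>f i)"
  have \<rho>fle: "\<rho>f i \<le> \<rho>g" for i unfolding \<rho>g_def using \<rho>f by (intro member_le_sum) auto
  have \<rho>g0: "\<rho>g \<ge> 0" unfolding \<rho>g_def using \<rho>f by (intro sum_nonneg) auto
  have gi_upper: "g (y k j) $ i \<le> g (x k) $ i + inner (V k $ i) (y k j - x k) + \<rho>g/2 * (norm (y k j - x k))\<^sup>2"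
    if jk: "j \<le> jk k" for k j i
  proof -
    have "g (y k j) $ i \<le> g (x k) $ i + inner (V k $ i) (y k j - x k) + \<rho>f i/2 * (norm (y k j - x k))\<^sup>2"
      using \<rho>f xK2[of k] yK2[OF jk] V_sub by blast
    moreover have "\<rho>f i/2 * (norm (y k j - x k))\<^sup>2 \<le> \<rho>g/2 * (norm (y k j - x k))\<^sup>2"
      using \<rho>fle[of i] by (intro mult_right_mono) auto
    ultimately show ?thesis by linarith
  qed
  have Gy_le: "Gmaj g (y k j) (x k) (V k) (L k j) $ i \<le> betaC/2 * (norm (y k j - x k))\<^sup>2"
    if jk: "j \<le> jk k" for k j i
  proof -
    have "norm_inf (pos_part (Gmaj g (y k j) (x k) (V k) (L k j))) \<le> betaC/2 * (norm (y k j - x k))\<^sup>2"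
      using y_feas_inexact jk by (smt (verit))
    thus ?thesis using norm_inf_pos_part_ge(1)[of "Gmaj g (y k j) (x k) (V k) (L k j)" i] by linarith
  qed
  define TL where "TL = max Lmax (tau * (\<rho>g + betaC))"
  have Linv: "\<exists>c\<ge>1. (\<forall>i. L k j $ i = c * L k 0 $ i) \<and> c * Lmin \<le> TL" if "j \<le> jk k" for k j
    using that
  proof (induction j)
    case 0 show ?case using par_L by (intro exI[of _ 1]) (simp add: TL_def)
  next
    case (Suc j)
    hence jl: "j < jk k" and jle: "j \<le> jk k" by simp_all
    obtain c where c1: "c \<ge> 1" and cL: "\<forall>i. L k j $ i = c * L k 0 $ i" and cT: "c * Lmin \<le> TL"
      using Suc.IH jle by blast
    show ?case
    proof (cases "g (y k j) \<in> nonpos")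
      case True
      hence "L k (Suc j) = L k j" using upd_feas jl by blast
      thus ?thesis using c1 cL cT by auto
    next
      case False
      hence e: "L k (Suc j) = tau *\<^sub>R L k j" using upd_infeas jl by blast
      obtain i where gi: "g (y k j) $ i > 0" using False by (auto simp: nonpos_def not_le)
      define T where "T = (norm (y k j - x k))\<^sup>2"
      have T0: "T \<ge> 0" by (simp add: T_def)
      have "L k j $ i < \<rho>g + betaC"
      proof (rule ccontr)
        assume "\<not> L k j $ i < \<rho>g + betaC"
        hence Lb: "L k j $ i \<ge> \<rho>g + betaC" by simp
        have u: "g (y k j) $ i \<le> g (x k) $ i + inner (V k $ i) (y k j - x k) + \<rho>g/2 * T"
          using gi_upper[OF jle] by (simp add: T_def)
        have G: "g (x k) $ i + inner (V k $ i) (y k j - x k) + 1/2 * T * L k j $ i \<le> betaC/2 * T"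
          using Gy_le[OF jle, of i] by (simp add: Gmaj_comp T_def)
        have m: "1/2 * T * (\<rho>g + betaC) \<le> 1/2 * T * L k j $ i" using Lb T0 by (intro mult_left_mono) auto
        have eq: "1/2 * T * (\<rho>g + betaC) = \<rho>g/2 * T + betaC/2 * T" by (simp add: algebra_simps)
        have "g (y k j) $ i \<le> 0" using u G m eq by linarith
        thus False using gi by simp
      qed
      hence "c * L k 0 $ i < \<rho>g + betaC" using cL by simp
      moreover have "c * Lmin \<le> c * L k 0 $ i" using L0 c1 by (intro mult_left_mono) auto
      ultimately have "c * Lmin < \<rho>g + betaC" by linarith
      hence "tau * (c * Lmin) \<le> tau * (\<rho>g + betaC)" using par_tau by (intro mult_left_mono) auto
      hence T1: "(tau * c) * Lmin \<le> TL" by (simp add: TL_def mult.assoc)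
      have T2: "\<forall>i. L k (Suc j) $ i = (tau * c) * L k 0 $ i" using e cL by simp
      have T3: "tau * c \<ge> 1" using c1 par_tau mult_mono[of 1 tau 1 c] by simp
      show ?thesis using T1 T2 T3 by blast
    qed
  qed
  have Lge: "L k j $ i \<ge> Lmin" if jk: "j \<le> jk k" for k j i
  proof -
    obtain c where c1: "c \<ge> 1" and cL: "\<forall>i. L k j $ i = c * L k 0 $ i" using Linv[OF jk] by blast
    have l0: "L k 0 $ i \<ge> Lmin" using L0 by blast
    hence "L k 0 $ i \<ge> 0" using par_L by linarith
    hence "1 * L k 0 $ i \<le> c * L k 0 $ i" using c1 by (intro mult_right_mono)
    hence "c * L k 0 $ i \<ge> L k 0 $ i" by simp
    moreover note l0
    ultimately show ?thesis using cL by simp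
  qed
  define BL where "BL = TL / Lmin * Lmax"
  have Lle: "L k j $ i \<le> BL" if jk: "j \<le> jk k" for k j i
  proof -
    obtain c where c1: "c \<ge> 1" and cL: "\<forall>i. L k j $ i = c * L k 0 $ i" and cT: "c * Lmin \<le> TL"
      using Linv[OF jk] by blast
    have cb: "c \<le> TL / Lmin" using cT par_L by (simp add: pos_le_divide_eq)
    have "c * L k 0 $ i \<le> c * Lmax" using L0 c1 by (intro mult_left_mono) auto
    also have "\<dots> \<le> TL / Lmin * Lmax" using cb par_L by (intro mult_right_mono) auto
    finally show ?thesis using cL by (simp add: BL_def)
  qed
  define K3 where "K3 = convex hull (feas g \<inter> cball 0 R2)"
  have K3c: "compact K3" "convex K3"
    unfolding K3_def
    by (rule compact_convex_hull[OF closed_Int_compact[OF feas_closed compact_cball]], rule convex_convex_hull)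
  have K3O: "K3 \<subseteq> Oset"
  proof -
    have "feas g \<inter> cball 0 R2 \<subseteq> Oset" using Gamma_sub by blast
    thus ?thesis unfolding K3_def by (rule hull_minimal) (rule O_convex)
  qed
  have inK3: "z \<in> K3" if "g z \<in> nonpos" "norm z \<le> R2" for z
  proof -
    have "z \<in> feas g \<inter> cball 0 R2" using that by (simp add: feas_def)
    thus ?thesis unfolding K3_def by (rule subsetD[OF hull_subset[of "feas g \<inter> cball 0 R2" convex]])
  qed
  have xK3: "x k \<in> K3" for k
  proof -
    have a: "g (x k) \<in> nonpos" using x_feas[of k] by (simp add: feas_def)
    have b: "norm (x k) \<le> R2" using Bx[of k] Ry1 by (simp add: R2_def)
    show ?thesis by (rule inK3[OF a b])
  qed
  have "\<forall>z\<in>K3. upper_C2_at g0 z" using g0_uC2 K3O by blast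
  hence "\<exists>\<rho>\<ge>0. \<forall>a\<in>K3. \<forall>b\<in>K3. \<forall>v\<in>limiting_subdiff g0 a. g0 b \<le> g0 a + inner v (b - a) + \<rho>/2 * (norm (b - a))\<^sup>2"
    by (rule uc2_global[OF K3c])
  then obtain \<rho>0 where \<rho>00: "\<rho>0 \<ge> 0"
    and \<rho>0: "\<forall>a\<in>K3. \<forall>b\<in>K3. \<forall>v\<in>limiting_subdiff g0 a. g0 b \<le> g0 a + inner v (b - a) + \<rho>0/2 * (norm (b - a))\<^sup>2"
    by blast
  define TM where "TM = max mumax (tau * (\<rho>0 + alpha))"
  have Minv: "mu k j \<le> TM" if "j \<le> jk k" for k j
    using that
  proof (induction j)
    case 0 show ?case using mu0 by (simp add: TM_def le_max_iff_disj)
  next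
    case (Suc j)
    hence jl: "j < jk k" and jle: "j \<le> jk k" by simp_all
    have ih: "mu k j \<le> TM" using Suc.IH jle by simp
    show ?case
    proof (cases "g (y k j) \<in> nonpos")
      case False
      hence "mu k (Suc j) = mu k j" using upd_infeas jl by blast
      thus ?thesis using ih by simp
    next
      case True
      hence e: "mu k (Suc j) = tau * mu k j" using upd_feas jl by blast
      have rej: "\<not> Fobj g0 g phi (y k j) \<le> Fobj g0 g phi (x k) - ereal (alpha / 2 * (norm (y k j - x k))\<^sup>2)"
        using reject jl True by blast
      have "mu k j < \<rho>0 + alpha"
      proof (rule ccontr)
        assume "\<not> mu k j < \<rho>0 + alpha"
        hence mb: "mu k j \<ge> \<rho>0 + alpha" by simp
        define T where "T = (norm (y k j - x k))\<^sup>2"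
        have T0: "T \<ge> 0" by (simp add: T_def)
        have yK3: "y k j \<in> K3" using inK3 True ynorm[OF jle] by blast
        have u: "g0 (y k j) \<le> g0 (x k) + inner (xi k) (y k j - x k) + \<rho>0/2 * T"
          using \<rho>0 xK3[of k] yK3 xi_sub by (simp add: T_def)
        have sym: "transpose (Q k j) = Q k j" using Q_sa jle by blast
        have fd: "Fmodel g0 phi (x k) (xi k) (Q k j) (y k j) - Fmodel g0 phi (x k) (xi k) (Q k j) (x k)
           = inner (xi k) (y k j - x k) + 1/2 * inner (y k j - x k) (Q k j *v (y k j - x k)) + phi (y k j) - phi (x k)"
          using Fmodel_diff[OF sym, of g0 phi "x k" "xi k" "y k j" "x k"] by simp
        have dd: "Fmodel g0 phi (x k) (xi k) (Q k j) (y k j) \<le> Fmodel g0 phi (x k) (xi k) (Q k j) (x k)"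
          using y_descent jle by blast
        have q: "inner (y k j - x k) (Q k j *v (y k j - x k)) \<ge> mu k j * T" using Q_bnd jle by (simp add: T_def)
        have q2: "mu k j * T \<ge> (\<rho>0 + alpha) * T" using mb T0 by (intro mult_right_mono) auto
        have eq: "1/2 * ((\<rho>0 + alpha) * T) = \<rho>0/2 * T + alpha/2 * T" by (simp add: algebra_simps)
        have "1/2 * inner (y k j - x k) (Q k j *v (y k j - x k)) \<ge> 1/2 * ((\<rho>0 + alpha) * T)" using q q2 by linarith
        hence "g0 (y k j) + phi (y k j) \<le> g0 (x k) + phi (x k) - alpha/2 * T" using u fd dd eq by linarith
        hence "Fobj g0 g phi (y k j) \<le> Fobj g0 g phi (x k) - ereal (alpha / 2 * (norm (y k j - x k))\<^sup>2)"
          using Fobj_feas[OF True] Fobj_feas[of "x k"] x_feas[of k] by (simp add: feas_def T_def)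
        thus False using rej by simp
      qed
      hence "tau * mu k j \<le> tau * (\<rho>0 + alpha)" using par_tau by (intro mult_left_mono) auto
      thus ?thesis using e by (simp add: TM_def)
    qed
  qed
  have M0: "M \<ge> 0" using par_pos by simp
  have Qent: "\<bar>Q k j $ a $ b\<bar> \<le> TM + M" if jk: "j \<le> jk k" for k j a b
  proof -
    have sym: "transpose (Q k j) = Q k j" using Q_sa jk by blast
    have mp: "mu k j \<ge> 0" using mu_ge[OF jk] par_mu by linarith
    have bnd: "\<forall>z. 0 \<le> inner z (Q k j *v z) \<and> inner z (Q k j *v z) \<le> (mu k j + M) * (norm z)\<^sup>2"
    proof
      fix z
      have "mu k j * (norm z)\<^sup>2 \<le> inner z (Q k j *v z) \<and> inner z (Q k j *v z) \<le> (mu k j + M) * (norm z)\<^sup>2"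
        using Q_bnd jk by blast
      moreover have "mu k j * (norm z)\<^sup>2 \<ge> 0" using mp by simp
      ultimately show "0 \<le> inner z (Q k j *v z) \<and> inner z (Q k j *v z) \<le> (mu k j + M) * (norm z)\<^sup>2" by linarith
    qed
    have "\<bar>Q k j $ a $ b\<bar> \<le> mu k j + M" using Q_entry_bound[OF sym bnd] mp M0 by simp
    thus ?thesis using Minv[OF jk] by linarith
  qed
  define CQ where "CQ = real CARD('n) * real CARD('n) * (TM + M)"
  have TM0: "TM \<ge> 0" using par_mu by (simp add: TM_def le_max_iff_disj)
  have CQ0: "CQ \<ge> 0" unfolding CQ_def using TM0 M0 by simp
  have Qv: "norm (Q k j *v d) \<le> CQ * norm d" if jk: "j \<le> jk k" for k j d
    using mv_norm_bound[of "Q k j" "TM + M" d] Qent[OF jk] by (simp add: CQ_def)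
  have Qn: "norm (Q k j) \<le> CQ" if jk: "j \<le> jk k" for k j
  proof -
    have "norm (Q k j) \<le> (\<Sum>a\<in>UNIV. norm (Q k j $ a))" by (rule norm_le_sum_cart)
    also have "\<dots> \<le> (\<Sum>a\<in>UNIV. \<Sum>b\<in>UNIV. \<bar>Q k j $ a $ b\<bar>)" by (intro sum_mono norm_le_l1_cart)
    also have "\<dots> \<le> (\<Sum>a\<in>(UNIV::'n set). \<Sum>b\<in>(UNIV::'n set). TM + M)"
      by (intro sum_mono) (rule Qent[OF jk])
    also have "\<dots> = CQ" by (simp add: CQ_def)
    finally show ?thesis .
  qed
  obtain Bphi2 where Bphi2: "\<And>z. norm z \<le> R2 + 1 \<Longrightarrow> \<bar>phi z\<bar> \<le> Bphi2"
    using convex_bounded_ball[OF phi_convex, of "R2 + 1"] by blast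
  have Spar_eq: "Spar g (x k, L k (jk k), V k, xi k, Q k (jk k)) = {z. Gmaj g z (x k) (V k) (L k (jk k)) \<in> nonpos}" for k
    by (simp add: Spar_def Hpar_def)
  have sep: "\<exists>gk. \<exists>vb. (\<forall>z\<in>Spar g (x k, L k (jk k), V k, xi k, Q k (jk k)). inner gk (z - xbar k (jk k)) \<ge> 0)
              \<and> (\<forall>w. phi w \<ge> phi (xbar k (jk k)) + inner vb (w - xbar k (jk k)))
              \<and> gk = xi k + Q k (jk k) *v (xbar k (jk k) - x k) + vb" for k
  proof -
    define j where "j = jk k"
    have jle: "j \<le> jk k" by (simp add: j_def)
    define xb where "xb = xbar k j"
    define S where "S = {z. Gmaj g z (x k) (V k) (L k j) \<in> nonpos}"
    define h where "h = Fmodel g0 phi (x k) (xi k) (Q k j)"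
    have sym: "transpose (Q k j) = Q k j" using Q_sa jle by blast
    have mp: "mu k j \<ge> 0" using mu_ge[OF jle] par_mu by linarith
    have psd: "\<forall>z. 0 \<le> inner z (Q k j *v z)"
    proof
      fix z
      have "mu k j * (norm z)\<^sup>2 \<le> inner z (Q k j *v z)" using Q_bnd jle by blast
      moreover have "mu k j * (norm z)\<^sup>2 \<ge> 0" using mp by simp
      ultimately show "0 \<le> inner z (Q k j *v z)" by linarith
    qed
    have hc: "convex_on UNIV h" unfolding h_def by (rule Fmodel_convex[OF sym psd phi_convex])
    have Lnn: "\<forall>i. L k j $ i \<ge> 0" using Lge[OF jle] par_L by (meson less_le_trans less_imp_le)
    have Sc: "convex S" unfolding S_def by (rule Gmaj_set_convex[OF Lnn])
    have xS: "xb \<in> S" using xbar_min jle by (simp add: S_def xb_def)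
    have mn: "\<forall>z\<in>S. h xb \<le> h z" using xbar_min jle by (simp add: S_def h_def xb_def)
    obtain gk where sub: "\<forall>z. h xb + inner gk (z - xb) \<le> h z" and nrm: "\<forall>z\<in>S. inner gk (z - xb) \<ge> 0"
      using sep_kkt[OF hc Sc xS mn] by blast
    define vb where "vb = gk - xi k - Q k j *v (xb - x k)"
    have H: "phi z - phi xb \<ge> inner vb (z - xb) - 1/2 * inner (z - xb) (Q k j *v (z - xb))" for z
    proof -
      have fd: "h z - h xb = inner (xi k + Q k j *v (xb - x k)) (z - xb) + 1/2 * inner (z - xb) (Q k j *v (z - xb)) + phi z - phi xb"
        unfolding h_def by (rule Fmodel_diff[OF sym])
      have "inner vb (z - xb) = inner gk (z - xb) - inner (xi k + Q k j *v (xb - x k)) (z - xb)"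
        by (simp add: vb_def inner_diff_left inner_add_left)
      thus ?thesis using sub fd by smt
    qed
    have sg: "\<forall>w. phi w \<ge> phi xb + inner vb (w - xb)" using dir_subgrad[OF phi_convex H] by blast
    have ge: "gk = xi k + Q k j *v (xb - x k) + vb" by (simp add: vb_def)
    have "\<forall>z\<in>Spar g (x k, L k (jk k), V k, xi k, Q k (jk k)). inner gk (z - xbar k (jk k)) \<ge> 0"
      using nrm unfolding Spar_eq S_def xb_def j_def .
    thus ?thesis using sg ge unfolding xb_def j_def by blast
  qed
  hence "\<forall>k. \<exists>gk. \<exists>vb. (\<forall>z\<in>Spar g (x k, L k (jk k), V k, xi k, Q k (jk k)). inner gk (z - xbar k (jk k)) \<ge> 0)
              \<and> (\<forall>w. phi w \<ge> phi (xbar k (jk k)) + inner vb (w - xbar k (jk k)))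
              \<and> gk = xi k + Q k (jk k) *v (xbar k (jk k) - x k) + vb" by blast
  hence "\<exists>gf. \<forall>k. \<exists>vb. (\<forall>z\<in>Spar g (x k, L k (jk k), V k, xi k, Q k (jk k)). inner (gf k) (z - xbar k (jk k)) \<ge> 0)
              \<and> (\<forall>w. phi w \<ge> phi (xbar k (jk k)) + inner vb (w - xbar k (jk k)))
              \<and> gf k = xi k + Q k (jk k) *v (xbar k (jk k) - x k) + vb" by (rule choice)
  then obtain gf where "\<forall>k. \<exists>vb. (\<forall>z\<in>Spar g (x k, L k (jk k), V k, xi k, Q k (jk k)). inner (gf k) (z - xbar k (jk k)) \<ge> 0)
              \<and> (\<forall>w. phi w \<ge> phi (xbar k (jk k)) + inner vb (w - xbar k (jk k)))
              \<and> gf k = xi k + Q k (jk k) *v (xbar k (jk k) - x k) + vb" by blast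
  hence "\<exists>vbf. \<forall>k. (\<forall>z\<in>Spar g (x k, L k (jk k), V k, xi k, Q k (jk k)). inner (gf k) (z - xbar k (jk k)) \<ge> 0)
              \<and> (\<forall>w. phi w \<ge> phi (xbar k (jk k)) + inner (vbf k) (w - xbar k (jk k)))
              \<and> gf k = xi k + Q k (jk k) *v (xbar k (jk k) - x k) + vbf k" by (rule choice)
  then obtain vbf where gvf: "\<forall>k. (\<forall>z\<in>Spar g (x k, L k (jk k), V k, xi k, Q k (jk k)). inner (gf k) (z - xbar k (jk k)) \<ge> 0)
              \<and> (\<forall>w. phi w \<ge> phi (xbar k (jk k)) + inner (vbf k) (w - xbar k (jk k)))
              \<and> gf k = xi k + Q k (jk k) *v (xbar k (jk k) - x k) + vbf k" by blast
  have xbn: "norm (xbar k (jk k)) \<le> R2" for k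
  proof -
    have "norm (xbar k (jk k)) \<le> norm (x k) + norm (xbar k (jk k) - x k)" by (rule norm_triangle_sub)
    thus ?thesis using Bx[of k] xbb[of "jk k" k] by (simp add: R2_def)
  qed
  have vbb: "norm (vbf k) \<le> 2 * Bphi2" for k
  proof -
    have "\<And>w. phi (xbar k (jk k)) + inner (vbf k) (w - xbar k (jk k)) \<le> phi w" using gvf by blast
    thus ?thesis using subgrad_bound[of phi "xbar k (jk k)" "vbf k" R2 Bphi2] Bphi2 xbn[of k] by blast
  qed
  define Bg where "Bg = Bxi + CQ * Ry + 2 * Bphi2"
  have gfb: "norm (gf k) \<le> Bg" for k
  proof -
    have e: "gf k = xi k + Q k (jk k) *v (xbar k (jk k) - x k) + vbf k" using gvf by blast
    have "norm (gf k) \<le> norm (xi k) + norm (Q k (jk k) *v (xbar k (jk k) - x k)) + norm (vbf k)"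
      unfolding e by (rule order_trans[OF norm_triangle_ineq add_right_mono[OF norm_triangle_ineq]])
    moreover have "norm (Q k (jk k) *v (xbar k (jk k) - x k)) \<le> CQ * Ry"
    proof -
      have "norm (Q k (jk k) *v (xbar k (jk k) - x k)) \<le> CQ * norm (xbar k (jk k) - x k)" using Qv by simp
      also have "\<dots> \<le> CQ * Ry" using xbb[of "jk k" k] CQ0 by (intro mult_left_mono) auto
      finally show ?thesis .
    qed
    ultimately show ?thesis using xib[of k] vbb[of k] by (simp add: Bg_def)
  qed
  define uu where "uu = (\<lambda>k. (x k, L k (jk k), V k, xi k, Q k (jk k)))"
  define ws where "ws = (\<lambda>k. (uu k, xbar k (jk k)))"
  have uuU: "uu k \<in> Upar" for k
  proof -
    have jle: "jk k \<le> jk k" by simp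
    have sym: "transpose (Q k (jk k)) = Q k (jk k)" using Q_sa jle by blast
    have mp: "mu k (jk k) \<ge> 0" using mu_ge[OF jle] par_mu by linarith
    have psd: "\<forall>z. 0 \<le> inner z (Q k (jk k) *v z)"
    proof
      fix z
      have "mu k (jk k) * (norm z)\<^sup>2 \<le> inner z (Q k (jk k) *v z)" using Q_bnd jle by blast
      moreover have "mu k (jk k) * (norm z)\<^sup>2 \<ge> 0" using mp by simp
      ultimately show "0 \<le> inner z (Q k (jk k) *v z)" by linarith
    qed
    have "\<forall>i. 0 \<le> L k (jk k) $ i"
    proof
      fix i have "Lmin \<le> L k (jk k) $ i" by (rule Lge[OF jle])
      thus "0 \<le> L k (jk k) $ i" using par_L by linarith
    qed
    hence Lnn: "L k (jk k) \<in> nonneg" by (simp add: nonneg_def)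
    have "(x k, L k (jk k), V k, xi k, Q k (jk k)) \<in> {(s, L, V, xi, Q). L \<in> nonneg \<and> transpose Q = Q \<and> (\<forall>z. 0 \<le> inner z (Q *v z))}"
      using Lnn sym psd by simp
    thus ?thesis unfolding Upar_def uu_def .
  qed
  have xbS: "xbar k (jk k) \<in> Spar g (uu k)" for k
  proof -
    have "Gmaj g (xbar k (jk k)) (x k) (V k) (L k (jk k)) \<in> nonpos" using xbar_min by blast
    thus ?thesis unfolding uu_def Spar_eq by simp
  qed
  have gN: "- gf k \<in> limiting_normal (Spar g (uu k)) (xbar k (jk k))" for k
  proof (rule convex_normal_lim[OF xbS])
    have "\<forall>z\<in>Spar g (uu k). inner (gf k) (z - xbar k (jk k)) \<ge> 0" using gvf unfolding uu_def by blast
    thus "\<forall>z\<in>Spar g (uu k). inner (- gf k) (z - xbar k (jk k)) \<le> 0" by (simp add: inner_minus_left)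
  qed
  have wsb: "bounded (range ws)"
  proof -
    have b1: "bounded (range x)" by (rule A3)
    have b2: "bounded (range (\<lambda>k. L k (jk k)))"
    proof -
      have "norm (L k (jk k)) \<le> (\<Sum>i\<in>(UNIV::'m set). BL)" for k
      proof -
        have "norm (L k (jk k)) \<le> (\<Sum>i\<in>UNIV. \<bar>L k (jk k) $ i\<bar>)" by (rule norm_le_l1_cart)
        also have "\<dots> \<le> (\<Sum>i\<in>(UNIV::'m set). BL)"
        proof (rule sum_mono)
          fix i
          have "L k (jk k) $ i \<ge> Lmin" "L k (jk k) $ i \<le> BL" using Lge[of "jk k" k i] Lle[of "jk k" k i] by simp_all
          thus "\<bar>L k (jk k) $ i\<bar> \<le> BL" using par_L by simp
        qed
        finally show ?thesis .
      qed
      hence "\<forall>z\<in>range (\<lambda>k. L k (jk k)). norm z \<le> (\<Sum>i\<in>(UNIV::'m set). BL)" by auto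
      thus ?thesis unfolding bounded_iff by (rule exI)
    qed
    have "\<forall>z\<in>range V. norm z \<le> (\<Sum>i\<in>UNIV. BVf i)" using Vb by auto
    hence b3: "bounded (range V)" unfolding bounded_iff by (rule exI)
    have "\<forall>z\<in>range xi. norm z \<le> Bxi" using xib by auto
    hence b4: "bounded (range xi)" unfolding bounded_iff by (rule exI)
    have "\<forall>z\<in>range (\<lambda>k. Q k (jk k)). norm z \<le> CQ" using Qn by auto
    hence b5: "bounded (range (\<lambda>k. Q k (jk k)))" unfolding bounded_iff by (rule exI)
    have "\<forall>z\<in>range (\<lambda>k. xbar k (jk k)). norm z \<le> R2" using xbn by auto
    hence b6: "bounded (range (\<lambda>k. xbar k (jk k)))" unfolding bounded_iff by (rule exI)
    have "bounded ((range x \<times> (range (\<lambda>k. L k (jk k)) \<times> (range V \<times> (range xi \<times> range (\<lambda>k. Q k (jk k)))))) \<times> range (\<lambda>k. xbar k (jk k)))"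
      by (intro bounded_Times b1 b2 b3 b4 b5 b6)
    moreover have "range ws \<subseteq> (range x \<times> (range (\<lambda>k. L k (jk k)) \<times> (range V \<times> (range xi \<times> range (\<lambda>k. Q k (jk k)))))) \<times> range (\<lambda>k. xbar k (jk k))"
      by (rule image_subsetI) (simp add: ws_def uu_def)
    ultimately show ?thesis by (rule bounded_subset)
  qed
  define LP where "LP = (\<lambda>k. Lambda_par g (uu k) (xbar k (jk k)) (- gf k))"
  have BMPu: "\<exists>\<Lambda> k0. \<forall>k\<ge>k0. \<exists>lb\<in>LP k. norm lb \<le> \<Lambda>"
  proof (rule ccontr)
    assume neg: "\<not> (\<exists>\<Lambda> k0. \<forall>k\<ge>k0. \<exists>lb\<in>LP k. norm lb \<le> \<Lambda>)"
    have H: "\<exists>k. k \<ge> snd p \<and> (\<forall>lb\<in>LP k. real (fst p) < norm lb)" for p :: "nat \<times> nat"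
    proof (rule ccontr)
      assume "\<not> (\<exists>k. k \<ge> snd p \<and> (\<forall>lb\<in>LP k. real (fst p) < norm lb))"
      hence "\<forall>k\<ge>snd p. \<exists>lb\<in>LP k. norm lb \<le> real (fst p)" by (auto simp: not_less)
      thus False using neg by blast
    qed
    hence "\<forall>p. \<exists>k. k \<ge> snd p \<and> (\<forall>lb\<in>LP k. real (fst p) < norm lb)" by blast
    hence "\<exists>\<sigma>. \<forall>p. \<sigma> p \<ge> snd p \<and> (\<forall>lb\<in>LP (\<sigma> p). real (fst p) < norm lb)"
      by (rule choice)
    then obtain \<sigma> where \<sigma>: "\<And>p. \<sigma> p \<ge> snd p" "\<And>p. \<forall>lb\<in>LP (\<sigma> p). real (fst p) < norm lb"
      by blast
    define r where "r = rec_nat (\<sigma> (0, 0)) (\<lambda>n rn. \<sigma> (Suc n, Suc rn))"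
    have r0: "r 0 = \<sigma> (0, 0)" by (simp add: r_def)
    have rS: "r (Suc n) = \<sigma> (Suc n, Suc (r n))" for n by (simp add: r_def)
    have rprop: "\<forall>lb\<in>LP (r n). real n < norm lb" for n
    proof (cases n)
      case 0 thus ?thesis using \<sigma>(2)[of "(0, 0)"] r0 by simp
    next
      case (Suc m) thus ?thesis using \<sigma>(2)[of "(Suc m, Suc (r m))"] rS[of m] by simp
    qed
    have rmono: "strict_mono r"
    proof (rule strict_mono_Suc_iff[THEN iffD2], rule allI)
      fix n have "r (Suc n) \<ge> Suc (r n)" using \<sigma>(1)[of "(Suc n, Suc (r n))"] rS[of n] by simp
      thus "r n < r (Suc n)" by simp
    qed
    have "range (ws \<circ> r) \<subseteq> range ws" by auto
    hence "bounded (range (ws \<circ> r))" using wsb bounded_subset by blast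
    then obtain l r2 where r2: "strict_mono r2" and conv: "((ws \<circ> r) \<circ> r2) \<longlonglongrightarrow> l"
      using bounded_imp_convergent_subsequence by blast
    obtain us xs where l: "l = (us, xs)" by fastforce
    have sm: "strict_mono (r \<circ> r2)" using rmono r2 by (rule strict_mono_o)
    have c2: "(ws \<circ> (r \<circ> r2)) \<longlonglongrightarrow> (us, xs)" using conv l by (simp add: comp_assoc)
    have "cluster_point ws (us, xs)"
      unfolding cluster_point_def using sm c2 by blast
    hence cp: "cluster_point (\<lambda>k. ((x k, L k (jk k), V k, xi k, Q k (jk k)), xbar k (jk k))) (us, xs)"
      by (simp add: ws_def uu_def)
    have "partial_BMP g us xs" using A4 cp by blast
    then obtain \<kappa> e where ke: "\<kappa> > 0" "e > 0"
      and P: "\<forall>u\<in>Upar. dist u us < e \<longrightarrow> (\<forall>x. dist x xs < e \<longrightarrow> x \<in> Spar g u \<longrightarrow>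
        (\<forall>y\<in>limiting_normal (Spar g u) x. (\<exists>lam\<in>Lambda_par g u x y. norm lam \<le> \<kappa> * norm y)))"
      unfolding partial_BMP_def by blast
    have "eventually (\<lambda>n. dist (((ws \<circ> r) \<circ> r2) n) l < e) sequentially"
      using conv ke(2) by (rule tendstoD)
    then obtain N where N: "\<And>n. n \<ge> N \<Longrightarrow> dist (((ws \<circ> r) \<circ> r2) n) l < e"
      unfolding eventually_sequentially by blast
    obtain m :: nat where m: "real m > \<kappa> * Bg" using reals_Archimedean2 by blast
    define n where "n = max N m"
    define k where "k = r (r2 n)"
    have dk: "dist (ws k) (us, xs) < e" using N[of n] l by (simp add: n_def k_def)
    have du: "dist (uu k) us < e"
      using dist_fst_le[of "ws k" "(us, xs)"] dk by (simp add: ws_def)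
    have dx: "dist (xbar k (jk k)) xs < e"
      using dist_snd_le[of "ws k" "(us, xs)"] dk by (simp add: ws_def)
    have "\<exists>lam\<in>Lambda_par g (uu k) (xbar k (jk k)) (- gf k). norm lam \<le> \<kappa> * norm (- gf k)"
      using P[rule_format, OF uuU[of k] du dx xbS[of k] gN[of k]] .
    then obtain lb where lb: "lb \<in> LP k" and lbn: "norm lb \<le> \<kappa> * norm (- gf k)"
      unfolding LP_def by blast
    have "\<kappa> * norm (- gf k) \<le> \<kappa> * Bg" using gfb[of k] ke(1) by (intro mult_left_mono) auto
    hence "norm lb \<le> \<kappa> * Bg" using lbn by linarith
    moreover have "real (r2 n) < norm lb" using rprop[of "r2 n"] lb by (simp add: k_def)
    moreover have "real m \<le> real (r2 n)" using seq_suble[OF r2, of n] by (simp add: n_def)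
    ultimately show False using m by linarith
  qed
  obtain \<Lambda> k0 where Lam: "\<forall>k\<ge>k0. \<exists>lb\<in>LP k. norm lb \<le> \<Lambda>" using BMPu by blast
  have \<Lambda>0: "\<Lambda> \<ge> 0"
  proof -
    obtain lb where "lb \<in> LP k0" "norm lb \<le> \<Lambda>" using Lam by blast
    thus ?thesis using norm_ge_zero[of lb] by linarith
  qed
  define cL where "cL = real CARD('m) * \<Lambda> * (betaC / 2)"
  have cL0: "cL \<ge> 0" using \<Lambda>0 par_pos by (simp add: cL_def)
  define Kc where "Kc = betaC / 2 + cL"
  define gam where "gam = max 1 ((betaS + Kc) / mumin)"
  have gam1: "gam \<ge> 1" by (simp add: gam_def)
  have main: "norm (x (Suc k) - xbar k (jk k)) \<le> gam * norm (x (Suc k) - x k)" if kk: "k \<ge> k0" for k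
  proof -
    define j where "j = jk k"
    have jle: "j \<le> jk k" by (simp add: j_def)
    obtain lb where lb: "lb \<in> LP k" and lbn: "norm lb \<le> \<Lambda>" using Lam kk by blast
    define xb where "xb = xbar k j"
    define yy where "yy = y k j"
    define xk where "xk = x k"
    have yx: "x (Suc k) = yy" using x_next by (simp add: yy_def j_def)
    define G where "G = (\<lambda>z. Gmaj g z xk (V k) (L k j))"
    define F where "F = Fmodel g0 phi xk (xi k) (Q k j)"
    define d where "d = xb - yy"
    define t where "t = norm (yy - xk)"
    define D where "D = norm d"
    have t0: "t \<ge> 0" and D0: "D \<ge> 0" by (simp_all add: t_def D_def)
    have sym: "transpose (Q k j) = Q k j" using Q_sa jle by blast
    have lbN: "lb \<in> limiting_normal nonpos (G xb)" and lbg: "gradH xk (L k j) (V k) xb lb = - gf k"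
      using lb by (simp_all add: LP_def Lambda_par_def Hpar_def uu_def G_def xb_def xk_def j_def)
    have lbc: "lb $ i \<ge> 0 \<and> lb $ i * G xb $ i = 0" for i using lim_normal_nonpos[OF lbN] by blast
    have Lnn: "L k j $ i \<ge> 0" for i using Lge[OF jle, of i] par_L by linarith
    have lamnn: "lam k j \<in> nonneg" using lam_nonneg jle by blast
    have Gxb: "G xb \<in> nonpos" using xbar_min jle by (simp add: G_def xb_def xk_def)
    have mq: "inner z (Q k j *v z) \<ge> mumin * (norm z)\<^sup>2" for z
    proof -
      have "inner z (Q k j *v z) \<ge> mu k j * (norm z)\<^sup>2" using Q_bnd jle by blast
      moreover have "mu k j * (norm z)\<^sup>2 \<ge> mumin * (norm z)\<^sup>2" using mu_ge[OF jle] by (intro mult_right_mono) auto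
      ultimately show ?thesis by linarith
    qed
    have v1: "phi xb \<ge> phi yy + inner (v k j) d"
      using convex_lim_sub[OF phi_convex, of "v k j" yy xb] v_sub jle by (simp add: yy_def d_def)
    have F1: "F xb - F yy = inner (xi k + Q k j *v (yy - xk)) d + 1/2 * inner d (Q k j *v d) + phi xb - phi yy"
      unfolding F_def d_def by (rule Fmodel_diff[OF sym])
    have G1: "inner (lam k j) (G xb) - inner (lam k j) (G yy) = inner (gradH xk (L k j) (V k) yy (lam k j)) d + inner (L k j) (lam k j) / 2 * D\<^sup>2"
      unfolding G_def d_def D_def by (rule Gmaj_diff)
    have Lla: "inner (L k j) (lam k j) \<ge> 0"
    proof -
      have "inner (L k j) (lam k j) = (\<Sum>i\<in>UNIV. L k j $ i * lam k j $ i)" by (simp add: inner_vec_def)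
      also have "\<dots> \<ge> 0" using Lnn lamnn by (intro sum_nonneg) (auto simp: nonneg_def)
      finally show ?thesis .
    qed
    have resid: "norm (xi k + Q k j *v (yy - xk) + v k j + gradH xk (L k j) (V k) yy (lam k j)) \<le> betaS * t"
    proof -
      have eq: "xi k + Q k j *v (yy - xk) + v k j + gradH xk (L k j) (V k) yy (lam k j)
          = xi k + Q k j *v (yy - xk) + v k j + transpose (V k) *v lam k j + inner (L k j) (lam k j) *\<^sub>R (yy - xk)"
        by (simp add: gradH_def add.assoc)
      have "norm (xi k + Q k j *v (yy - xk) + v k j + transpose (V k) *v lam k j + inner (L k j) (lam k j) *\<^sub>R (yy - xk)) \<le> betaS * t"
        using y_stat_inexact jle unfolding yy_def xk_def t_def by blast
      thus ?thesis unfolding eq .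
    qed
    have rd: "inner (xi k + Q k j *v (yy - xk) + v k j + gradH xk (L k j) (V k) yy (lam k j)) d \<ge> - (betaS * t * D)"
    proof -
      have "\<bar>inner (xi k + Q k j *v (yy - xk) + v k j + gradH xk (L k j) (V k) yy (lam k j)) d\<bar>
          \<le> norm (xi k + Q k j *v (yy - xk) + v k j + gradH xk (L k j) (V k) yy (lam k j)) * D"
        unfolding D_def by (rule Cauchy_Schwarz_ineq2)
      also have "\<dots> \<le> betaS * t * D" using resid D0 by (intro mult_right_mono) auto
      finally show ?thesis by linarith
    qed
    have rsplit: "inner (xi k + Q k j *v (yy - xk) + v k j + gradH xk (L k j) (V k) yy (lam k j)) d
        = inner (xi k + Q k j *v (yy - xk)) d + inner (v k j) d + inner (gradH xk (L k j) (V k) yy (lam k j)) d"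
      by (simp add: inner_add_left)
    have lG1: "inner (lam k j) (G xb) \<le> 0" by (rule inner_nonneg_nonpos[OF lamnn Gxb])
    have lG2: "- inner (lam k j) (G yy) \<le> betaC/2 * t\<^sup>2"
    proof -
      have "max (- inner (lam k j) (G yy)) 0 + norm_inf (pos_part (G yy)) \<le> betaC / 2 * t\<^sup>2"
        using y_feas_inexact jle by (simp add: G_def yy_def xk_def t_def)
      moreover have "norm_inf (pos_part (G yy)) \<ge> 0" by (rule norm_inf_pos_part_ge(2))
      ultimately show ?thesis by linarith
    qed
    have LD: "inner (L k j) (lam k j) / 2 * D\<^sup>2 \<ge> 0" using Lla by simp
    have qd: "1/2 * inner d (Q k j *v d) \<ge> 1/2 * (mumin * D\<^sup>2)" using mq[of d] by (simp add: D_def)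
    have E1: "F xb - F yy \<ge> - (betaS * t * D) + 1/2 * (mumin * D\<^sup>2) - betaC/2 * t\<^sup>2"
      using F1 v1 G1 rd rsplit lG1 lG2 LD qd by linarith
    have gk: "gf k = xi k + Q k j *v (xb - xk) + vbf k" using gvf by (simp add: j_def xb_def xk_def)
    have vb2: "phi yy \<ge> phi xb + inner (vbf k) (yy - xb)" using gvf by (simp add: j_def xb_def)
    have F2: "F yy - F xb = inner (xi k + Q k j *v (xb - xk)) (yy - xb) + 1/2 * inner (yy - xb) (Q k j *v (yy - xb)) + phi yy - phi xb"
      unfolding F_def by (rule Fmodel_diff[OF sym])
    have nyx: "norm (yy - xb) = D" by (simp add: D_def d_def norm_minus_commute)
    have gsplit: "inner (gf k) (yy - xb) = inner (xi k + Q k j *v (xb - xk)) (yy - xb) + inner (vbf k) (yy - xb)"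
      unfolding gk by (simp add: inner_add_left)
    have qd2: "1/2 * inner (yy - xb) (Q k j *v (yy - xb)) \<ge> 1/2 * (mumin * D\<^sup>2)" using mq[of "yy - xb"] nyx by simp
    have G2: "inner lb (G yy) - inner lb (G xb) = inner (gradH xk (L k j) (V k) xb lb) (yy - xb) + inner (L k j) lb / 2 * D\<^sup>2"
      unfolding G_def nyx[symmetric] by (rule Gmaj_diff)
    have lbG0: "inner lb (G xb) = 0" using lbc by (intro inner_compl_zero) blast
    have Llb: "inner (L k j) lb / 2 * D\<^sup>2 \<ge> 0"
    proof -
      have "inner (L k j) lb = (\<Sum>i\<in>UNIV. L k j $ i * lb $ i)" by (simp add: inner_vec_def)
      also have "\<dots> \<ge> 0" using Lnn lbc by (intro sum_nonneg) auto
      finally show ?thesis by simp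
    qed
    have gH: "inner (gradH xk (L k j) (V k) xb lb) (yy - xb) = - inner (gf k) (yy - xb)"
      by (simp add: lbg inner_minus_left)
    have lbGy: "inner lb (G yy) \<le> cL * t\<^sup>2"
    proof -
      have a0: "betaC / 2 * t\<^sup>2 \<ge> 0" using par_pos by simp
      have "\<forall>i. G yy $ i \<le> betaC / 2 * t\<^sup>2" using Gy_le[OF jle] by (simp add: G_def yy_def xk_def t_def)
      hence "inner lb (G yy) \<le> real CARD('m) * norm lb * (betaC / 2 * t\<^sup>2)"
        using lbc a0 by (intro inner_le_bound) auto
      also have "\<dots> \<le> real CARD('m) * \<Lambda> * (betaC / 2 * t\<^sup>2)"
        using lbn a0 by (intro mult_right_mono mult_left_mono) auto
      also have "\<dots> = cL * t\<^sup>2" by (simp add: cL_def)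
      finally show ?thesis .
    qed
    have E2: "F yy - F xb \<ge> - (cL * t\<^sup>2) + 1/2 * (mumin * D\<^sup>2)"
      using F2 vb2 gsplit qd2 G2 lbG0 Llb gH lbGy by linarith
    have key: "mumin * D\<^sup>2 \<le> betaS * t * D + betaC/2 * t\<^sup>2 + cL * t\<^sup>2" using E1 E2 by linarith
    have "D \<le> gam * t"
    proof (cases "D \<le> t")
      case True
      have "t \<le> gam * t" using gam1 t0 by (simp add: mult_le_cancel_right1)
      thus ?thesis using True by linarith
    next
      case False
      hence tD: "t < D" by simp
      hence Dp: "D > 0" using t0 by linarith
      have tt: "t\<^sup>2 \<le> t * D" using tD t0 by (simp add: power2_eq_square mult_left_mono)
      have k1: "betaC/2 * t\<^sup>2 \<le> betaC/2 * (t * D)" using tt par_pos by (intro mult_left_mono) auto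
      have k2: "cL * t\<^sup>2 \<le> cL * (t * D)" using tt cL0 by (intro mult_left_mono) auto
      have "(mumin * D) * D \<le> ((betaS + Kc) * t) * D"
      proof -
        have "(mumin * D) * D = mumin * D\<^sup>2" by (simp add: power2_eq_square)
        moreover have "((betaS + Kc) * t) * D = betaS * t * D + betaC/2 * (t * D) + cL * (t * D)"
          by (simp add: Kc_def algebra_simps)
        ultimately show ?thesis using key k1 k2 by linarith
      qed
      hence "mumin * D \<le> (betaS + Kc) * t" using Dp by (simp add: mult_le_cancel_right)
      hence "D \<le> (betaS + Kc) * t / mumin" using par_mu by (simp add: pos_le_divide_eq mult.commute)
      also have "\<dots> = (betaS + Kc) / mumin * t" by simp
      also have "\<dots> \<le> gam * t" using t0 by (intro mult_right_mono) (auto simp: gam_def)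
      finally show ?thesis .
    qed
    thus ?thesis unfolding yx using nyx by (simp add: t_def xk_def xb_def j_def norm_minus_commute)
  qed
  show ?thesis using main gam1 by (intro exI[of _ k0] exI[of _ gam]) auto
qed

end
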